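(* Let $K$ be a flat virtual knot diagram (one component) whose oriented chord diagram does not admit a filamentation. Then $K$ is not flat equivalent to the trivial flat diagram (an embedded circle with no crossings).
   Context: A flat virtual knot diagram is a generic immersion of an oriented circle in the plane in which each double point is labelled either real (flat, no over/under information) or virtual. Two such diagrams are flat equivalent if they are related by planar isotopy and finitely many flat Reidemeister moves: Reidemeister moves I, II, III with all crossings real and over/under information ignored, the same three moves with all crossings virtual, and the mixed move in which a strand containing two consecutive virtual crossings passes across a real crossing. The oriented chord diagram (OCD) of a flat virtual knot diagram $K$: take a circle $C$, oriented counterclockwise, parametrizing $K$; for each real crossing draw a chord joining the two preimages of that crossing (virtual crossings give no chords). Label each chord endpoint $+$ or $-$: viewing the strand through that endpoint in the direction of its orientation, if the other strand of the crossing passes from right to left label it $+$, otherwise $-$. Each chord $x$ has endpoints $X^+$ and $X^-$. Filamentations. Let ${\mathcal D}$ be an OCD on the circle $C=\partial\Delta$, $\Delta$ a disk. A pairing is a partition of the set of chords into unordered pairs $\{x,y\}$ with $x\neq y$ and self-pairs $(x,x)$. A choice of filaments assigns to each self-pair $(x,x)$ one curve (monofilament) from $X^-$ to $X^+$, and to each pair $(x,y)$ with $x\ne y$ two curves (bifilaments), one from $Y^-$ to $X^+$ and one from $X^-$ to $Y^+$. Each filament is a generically immersed arc in $\Delta$ with the indicated endpoints on $C$ and interior in the interior of $\Delta$, oriented from its $-$ endpoint to its $+$ endpoint; all filaments are in general position. For distinct filaments $\alpha,\gamma$, $\alpha\cdot\gamma$ is the sum over points of $\alpha\cap\gamma$ of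 $+1$ if, looking along $\alpha$, $\gamma$ passes from right to left, and $-1$ otherwise. For a pair $P$ with set of filaments $F(P)$, $I(P)=\sum_{\beta\in F(P)}\sum_{\gamma\notin F(P)}\beta\cdot\gamma$. A filamentation on ${\mathcal D}$ is a pairing with a choice of filaments such that $I(P)=0$ for every pair $P$; ${\mathcal D}$ admits a filamentation if one exists. *)

theory Defs
  imports "HOL-Analysis.Analysis"
begin

text \<open>An endpoint of a chord is a pair (chord label, sign), sign True meaning +.
  An OCD is the cyclic list of chord endpoints in the order in which they are met
  along the counterclockwise oriented circle C (list taken up to rotation).\<close>

type_synonym endpoint = "nat \<times> bool"
type_synonym ocd = "endpoint list"

definition wf_ocd :: "ocd \<Rightarrow> bool" where
  "wf_ocd w \<longleftrightarrow> distinct w \<and> (\<forall>c b. (c, b) \<in> set w \<longrightarrow> (c, \<not> b) \<in> set w)"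

definition chords :: "ocd \<Rightarrow> nat set" where
  "chords w = fst ` set w"

definition tsg :: "int \<Rightarrow> bool" where
  "tsg k \<longleftrightarrow> k > 0"

text \<open>Local pictures of the three strands of a real Reidemeister III triangle.
  Chord x joins strands 1,2, chord y strands 1,3, chord z strands 2,3.
  Parameters e1 e2 e3 s (each 1 or -1) encode the order of the crossings
  on each strand and the orientation of the triangle.\<close>

definition r3_seg1 :: "nat \<Rightarrow> nat \<Rightarrow> nat \<Rightarrow> int \<Rightarrow> int \<Rightarrow> int \<Rightarrow> int \<Rightarrow> ocd" where
  "r3_seg1 x y z e1 e2 e3 s =
     (if e1 = 1 then [(y, tsg (- e1 * e3 * s)), (x, tsg (e1 * e2 * s))]
      else [(x, tsg (e1 * e2 * s)), (y, tsg (- e1 * e3 * s))])"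

definition r3_seg2 :: "nat \<Rightarrow> nat \<Rightarrow> nat \<Rightarrow> int \<Rightarrow> int \<Rightarrow> int \<Rightarrow> int \<Rightarrow> ocd" where
  "r3_seg2 x y z e1 e2 e3 s =
     (if e2 = 1 then [(x, tsg (- e1 * e2 * s)), (z, tsg (e2 * e3 * s))]
      else [(z, tsg (e2 * e3 * s)), (x, tsg (- e1 * e2 * s))])"

definition r3_seg3 :: "nat \<Rightarrow> nat \<Rightarrow> nat \<Rightarrow> int \<Rightarrow> int \<Rightarrow> int \<Rightarrow> int \<Rightarrow> ocd" where
  "r3_seg3 x y z e1 e2 e3 s =
     (if e3 = 1 then [(z, tsg (- e2 * e3 * s)), (y, tsg (e3 * e1 * s))]
      else [(y, tsg (e3 * e1 * s)), (z, tsg (- e2 * e3 * s))])"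

inductive flat_move :: "ocd \<Rightarrow> ocd \<Rightarrow> bool" where
  rotate: "flat_move w (rotate1 w)"
| relabel: "inj_on f (chords w) \<Longrightarrow> flat_move w (map (\<lambda>(c, b). (f c, b)) w)"
| R1: "c \<notin> chords (u @ v) \<Longrightarrow> flat_move (u @ v) (u @ [(c, b), (c, \<not> b)] @ v)"
| R2_par: "p \<noteq> q \<Longrightarrow> p \<notin> chords (u @ v @ t) \<Longrightarrow> q \<notin> chords (u @ v @ t) \<Longrightarrow>
     flat_move (u @ v @ t) (u @ [(p, b), (q, \<not> b)] @ v @ [(p, \<not> b), (q, b)] @ t)"
| R2_anti: "p \<noteq> q \<Longrightarrow> p \<notin> chords (u @ v @ t) \<Longrightarrow> q \<notin> chords (u @ v @ t) \<Longrightarrow>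
     flat_move (u @ v @ t) (u @ [(p, b), (q, \<not> b)] @ v @ [(q, b), (p, \<not> b)] @ t)"
| R3: "x \<noteq> y \<Longrightarrow> x \<noteq> z \<Longrightarrow> y \<noteq> z \<Longrightarrow>
     e1 \<in> {1, -1} \<Longrightarrow> e2 \<in> {1, -1} \<Longrightarrow> e3 \<in> {1, -1} \<Longrightarrow> s \<in> {1, -1} \<Longrightarrow>
     flat_move (r3_seg1 x y z e1 e2 e3 s @ u @ r3_seg2 x y z e1 e2 e3 s @ v @ r3_seg3 x y z e1 e2 e3 s @ t)
               (rev (r3_seg1 x y z e1 e2 e3 s) @ u @ rev (r3_seg2 x y z e1 e2 e3 s) @ v
                  @ rev (r3_seg3 x y z e1 e2 e3 s) @ t)"

definition flat_equiv :: "ocd \<Rightarrow> ocd \<Rightarrow> bool" where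
  "flat_equiv = equivclp flat_move"

definition ep_pos :: "ocd \<Rightarrow> endpoint \<Rightarrow> complex" where
  "ep_pos w e = cis (2 * pi * real (THE k. k < length w \<and> w ! k = e) / real (length w))"

definition cross :: "complex \<Rightarrow> complex \<Rightarrow> real" where
  "cross u v = Im (cnj u * v)"

definition dv :: "(real \<Rightarrow> complex) \<Rightarrow> real \<Rightarrow> complex" where
  "dv \<gamma> t = vector_derivative \<gamma> (at t within {0..1})"

definition filament_arc :: "(real \<Rightarrow> complex) \<Rightarrow> complex \<Rightarrow> complex \<Rightarrow> bool" where
  "filament_arc \<gamma> a b \<longleftrightarrow> \<gamma> C1_differentiable_on {0..1} \<and> (\<forall>t\<in>{0..1}. dv \<gamma> t \<noteq> 0)
     \<and> \<gamma> 0 = a \<and> \<gamma> 1 = b \<and> (\<forall>t\<in>{0<..<1}. norm (\<gamma> t) < 1)"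

text \<open>Generic immersion and general position of the family: only finitely many
  double points, all transverse, and no triple points.\<close>
definition general_position :: "nat set \<Rightarrow> (nat \<Rightarrow> real \<Rightarrow> complex) \<Rightarrow> bool" where
  "general_position X \<Gamma> \<longleftrightarrow>
     finite {p. 2 \<le> card {(i, t). i \<in> X \<and> t \<in> {0..1} \<and> \<Gamma> i t = p}
                 \<or> infinite {(i, t). i \<in> X \<and> t \<in> {0..1} \<and> \<Gamma> i t = p}} \<and>
     (\<forall>p. finite {(i, t). i \<in> X \<and> t \<in> {0..1} \<and> \<Gamma> i t = p}
          \<and> card {(i, t). i \<in> X \<and> t \<in> {0..1} \<and> \<Gamma> i t = p} \<le> 2) \<and>
     (\<forall>i\<in>X. \<forall>j\<in>X. \<forall>s\<in>{0..1}. \<forall>t\<in>{0..1}.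
        (i, s) \<noteq> (j, t) \<and> \<Gamma> i s = \<Gamma> j t \<longrightarrow> cross (dv (\<Gamma> i) s) (dv (\<Gamma> j) t) \<noteq> 0)"

text \<open>Algebraic intersection number alpha . gamma: +1 at a crossing where, looking
  along alpha, gamma passes from right to left, -1 otherwise.\<close>
definition inum :: "(real \<Rightarrow> complex) \<Rightarrow> (real \<Rightarrow> complex) \<Rightarrow> int" where
  "inum \<alpha> \<gamma> = (\<Sum>(s, t) \<in> {(s, t). s \<in> {0..1} \<and> t \<in> {0..1} \<and> \<alpha> s = \<gamma> t}.
                   (if cross (dv \<alpha> s) (dv \<gamma> t) > 0 then 1 else -1))"

text \<open>A pairing is an involution pi on the chords (pi x = x: self-pair (x,x)).
  The filament Gamma x runs from the - endpoint of pi x to the + endpoint of x;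
  so a self-pair gets the monofilament X^- to X^+, and a pair (x,y) gets the
  bifilaments Y^- to X^+ (Gamma x) and X^- to Y^+ (Gamma y).\<close>
definition is_pairing :: "nat set \<Rightarrow> (nat \<Rightarrow> nat) \<Rightarrow> bool" where
  "is_pairing X \<pi> \<longleftrightarrow> (\<forall>x\<in>X. \<pi> x \<in> X \<and> \<pi> (\<pi> x) = x)"

definition is_filamentation :: "ocd \<Rightarrow> (nat \<Rightarrow> nat) \<Rightarrow> (nat \<Rightarrow> real \<Rightarrow> complex) \<Rightarrow> bool" where
  "is_filamentation w \<pi> \<Gamma> \<longleftrightarrow>
     is_pairing (chords w) \<pi> \<and>
     (\<forall>x\<in>chords w. filament_arc (\<Gamma> x) (ep_pos w (\<pi> x, False)) (ep_pos w (x, True))) \<and>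
     general_position (chords w) \<Gamma> \<and>
     (\<forall>x\<in>chords w. (\<Sum>\<beta>\<in>{x, \<pi> x}. \<Sum>\<gamma>\<in>chords w - {x, \<pi> x}. inum (\<Gamma> \<beta>) (\<Gamma> \<gamma>)) = 0)"

definition admits_filamentation :: "ocd \<Rightarrow> bool" where
  "admits_filamentation w \<longleftrightarrow> (\<exists>\<pi> \<Gamma>. is_filamentation w \<pi> \<Gamma>)"

end

theory Submission
  imports Defs
begin



definition sg :: "endpoint \<Rightarrow> int" where "sg e = (if snd e then 1 else -1)"
definition ssum :: "ocd \<Rightarrow> int" where "ssum l = sum_list (map sg l)"
definition pre :: "ocd \<Rightarrow> endpoint \<Rightarrow> int" where
  "pre w e = ssum (takeWhile (\<lambda>a. a \<noteq> e) w)"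
definition idx :: "ocd \<Rightarrow> nat \<Rightarrow> int" where
  "idx w x = pre w (x, True) - pre w (x, False) + 1"
definition Cnd :: "ocd \<Rightarrow> bool" where
  "Cnd w \<longleftrightarrow> (\<forall>k. card {x \<in> chords w. idx w x = k} = card {x \<in> chords w. idx w x = - k})"

lemma ssum_Nil[simp]: "ssum [] = 0" by (simp add: ssum_def)
lemma ssum_Cons[simp]: "ssum (a # l) = sg a + ssum l" by (simp add: ssum_def)
lemma ssum_append[simp]: "ssum (l1 @ l2) = ssum l1 + ssum l2" by (simp add: ssum_def)
lemma ssum_rev[simp]: "ssum (rev l) = ssum l" by (simp add: ssum_def sum_list_rev rev_map[symmetric])
lemma sg_simps[simp]: "sg (c, True) = 1" "sg (c, False) = -1" "sg (c, b) = (if b then 1 else -1)"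
  by (simp_all add: sg_def)

lemma pre_Nil[simp]: "pre [] e = 0" by (simp add: pre_def)
lemma pre_Cons: "pre (a # l) e = (if a = e then 0 else sg a + pre l e)"
  by (simp add: pre_def)
lemma pre_append: "pre (l1 @ l2) e = (if e \<in> set l1 then pre l1 e else ssum l1 + pre l2 e)"
proof (cases "e \<in> set l1")
  case True then show ?thesis unfolding pre_def by (simp add: takeWhile_append1)
next
  case False then show ?thesis unfolding pre_def by (subst takeWhile_append2) auto
qed

lemma finite_chords[simp]: "finite (chords w)" by (simp add: chords_def)

lemma chords_append[simp]: "chords (a @ b) = chords a \<union> chords b"
  by (auto simp: chords_def)
lemma chords_Cons[simp]: "chords (e # b) = insert (fst e) (chords b)"
  by (auto simp: chords_def)
lemma chords_Nil[simp]: "chords [] = {}"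
  by (auto simp: chords_def)
lemma chords_rev[simp]: "chords (rev a) = chords a"
  by (auto simp: chords_def)

lemma wf_ssum:
  assumes "wf_ocd w" shows "ssum w = 0"
proof -
  define fl where "fl = (\<lambda>(c::nat, b::bool). (c, \<not> b))"
  have d: "distinct w" using assms by (simp add: wf_ocd_def)
  have s: "ssum w = sum sg (set w)" using d by (simp add: ssum_def sum_list_distinct_conv_sum_set)
  have bij: "bij_betw fl (set w) (set w)"
    unfolding bij_betw_def inj_on_def
  proof (intro conjI ballI impI)
    show "fl ` set w = set w"
    proof
      show "fl ` set w \<subseteq> set w" using assms by (auto simp: wf_ocd_def fl_def)
      show "set w \<subseteq> fl ` set w"
      proof
        fix e assume "e \<in> set w"
        then obtain c b where e: "e = (c, b)" "(c, b) \<in> set w" by (metis prod.exhaust)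
        then have "(c, \<not> b) \<in> set w" using assms by (auto simp: wf_ocd_def)
        then show "e \<in> fl ` set w" using e by (auto simp: fl_def intro!: image_eqI[where x="(c, \<not> b)"])
      qed
    qed
  qed (auto simp: fl_def)
  have "sum sg (set w) = sum (\<lambda>e. sg (fl e)) (set w)"
    using sum.reindex_bij_betw[OF bij, of sg] by simp
  also have "\<dots> = - sum sg (set w)"
    unfolding sum_negf[symmetric] by (rule sum.cong) (auto simp: fl_def sg_def split_def)
  finally show ?thesis using s by simp
qed

lemma card_cnt_insert:
  assumes "finite C" "c \<notin> C"
  shows "card {x \<in> insert c C. f x = k} = card {x \<in> C. f x = k} + (if f c = k then 1 else 0)"
proof (cases "f c = k")
  case True
  then have "{x \<in> insert c C. f x = k} = insert c {x \<in> C. f x = k}" by auto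
  then show ?thesis using assms True by simp
next
  case False
  then have "{x \<in> insert c C. f x = k} = {x \<in> C. f x = k}" by auto
  then show ?thesis using False by simp
qed

lemma card_cnt_cong:
  assumes "\<forall>x\<in>C. f x = g x"
  shows "{x \<in> C. f x = k} = {x \<in> C. g x = k}"
  using assms by auto

lemma Cnd_cong:
  assumes "chords b = chords a" "\<forall>x\<in>chords a. idx b x = idx a x"
  shows "Cnd a \<longleftrightarrow> Cnd b"
proof -
  have "\<And>k. {x \<in> chords b. idx b x = k} = {x \<in> chords a. idx a x = k}" using assms by auto
  then show ?thesis unfolding Cnd_def by simp
qed

lemma Cnd_img:
  assumes "chords b = f ` chords a" "inj_on f (chords a)" "\<forall>x\<in>chords a. idx b (f x) = idx a x"
  shows "Cnd a \<longleftrightarrow> Cnd b"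
proof -
  have e: "\<And>k. {y \<in> chords b. idx b y = k} = f ` {x \<in> chords a. idx a x = k}"
    using assms by auto
  have c: "\<And>k. card {y \<in> chords b. idx b y = k} = card {x \<in> chords a. idx a x = k}"
    unfolding e by (rule card_image) (rule inj_on_subset[OF assms(2)], auto)
  show ?thesis unfolding Cnd_def c ..
qed

lemma Cnd_ins2:
  assumes "chords b = insert p (insert q (chords a))" "p \<noteq> q" "p \<notin> chords a" "q \<notin> chords a"
    "\<forall>x\<in>chords a. idx b x = idx a x" "idx b p = - idx b q"
  shows "Cnd a \<longleftrightarrow> Cnd b"
proof -
  have "\<And>k. card {x \<in> chords b. idx b x = k} = card {x \<in> chords a. idx a x = k}
      + (if idx b q = k then 1 else 0) + (if idx b p = k then 1 else 0)"
  proof -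
    fix k
    have "card {x \<in> chords b. idx b x = k} = card {x \<in> insert q (chords a). idx b x = k} + (if idx b p = k then 1 else 0)"
      unfolding assms(1) by (rule card_cnt_insert) (use assms in auto)
    also have "card {x \<in> insert q (chords a). idx b x = k} = card {x \<in> chords a. idx b x = k} + (if idx b q = k then 1 else 0)"
      by (rule card_cnt_insert) (use assms in auto)
    also have "{x \<in> chords a. idx b x = k} = {x \<in> chords a. idx a x = k}" using assms(5) by auto
    finally show "?thesis k" .
  qed
  then show ?thesis unfolding Cnd_def using assms(6) by auto
qed

lemma Cnd_ins1:
  assumes "chords b = insert p (chords a)" "p \<notin> chords a"
    "\<forall>x\<in>chords a. idx b x = idx a x" "idx b p = 0"
  shows "Cnd a \<longleftrightarrow> Cnd b"
proof -
  have "\<And>k. card {x \<in> chords b. idx b x = k} = card {x \<in> chords a. idx a x = k}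
      + (if idx b p = k then 1 else 0)"
  proof -
    fix k
    have "card {x \<in> chords b. idx b x = k} = card {x \<in> chords a. idx b x = k} + (if idx b p = k then 1 else 0)"
      unfolding assms(1) by (rule card_cnt_insert) (use assms in auto)
    also have "{x \<in> chords a. idx b x = k} = {x \<in> chords a. idx a x = k}" using assms(3) by auto
    finally show "?thesis k" .
  qed
  then show ?thesis unfolding Cnd_def using assms(4) by auto
qed

lemma mem_chords: "(c, b) \<in> set w \<Longrightarrow> c \<in> chords w"
  by (force simp: chords_def)

lemma chords_ex: "x \<in> chords w \<Longrightarrow> \<exists>b. (x, b) \<in> set w"
  by (force simp: chords_def)

lemma wf_both: assumes "wf_ocd w" "x \<in> chords w" shows "(x, b) \<in> set w"
proof -
  obtain b0 where b0: "(x, b0) \<in> set w" using chords_ex[OF assms(2)] by blast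
  show ?thesis
  proof (cases "b0 = b")
    case True then show ?thesis using b0 by simp
  next
    case False then have "b = (\<not> b0)" by auto
    then show ?thesis using b0 assms(1) by (simp add: wf_ocd_def)
  qed
qed

lemma notin_chords: "c \<notin> chords w \<Longrightarrow> (c, b) \<notin> set w"
  using mem_chords by blast

lemma move_rotate:
  shows "wf_ocd w \<longleftrightarrow> wf_ocd (rotate1 w)"
    and "wf_ocd w \<Longrightarrow> Cnd w \<longleftrightarrow> Cnd (rotate1 w)"
proof -
  show "wf_ocd w \<longleftrightarrow> wf_ocd (rotate1 w)" by (simp add: wf_ocd_def)
  assume wf: "wf_ocd w"
  show "Cnd w \<longleftrightarrow> Cnd (rotate1 w)"
  proof (cases w)
    case Nil then show ?thesis by simp
  next
    case (Cons e l)
    have d: "distinct (e # l)" using wf Cons by (simp add: wf_ocd_def)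
    have sl: "ssum l = - sg e" using wf_ssum[OF wf] Cons by simp
    have ch: "chords (l @ [e]) = chords (e # l)" by auto
    have "\<forall>x\<in>chords (e # l). idx (l @ [e]) x = idx (e # l) x"
    proof
      fix x assume x: "x \<in> chords (e # l)"
      have T: "(x, True) \<in> set (e # l)" and F: "(x, False) \<in> set (e # l)"
        using wf_both[OF wf, of x] x Cons by auto
      show "idx (l @ [e]) x = idx (e # l) x"
      proof (cases "e = (x, True)")
        case True
        then have "(x, False) \<in> set l" "(x, True) \<notin> set l" using F d by auto
        then show ?thesis using True sl by (simp add: idx_def pre_append pre_Cons)
      next
        case False
        show ?thesis
        proof (cases "e = (x, False)")
          case True
          then have "(x, True) \<in> set l" "(x, False) \<notin> set l" using T d by auto
          then show ?thesis using True sl by (simp add: idx_def pre_append pre_Cons)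
        next
          case False2: False
          then have "(x, True) \<in> set l" "(x, False) \<in> set l" using T F False by auto
          then show ?thesis using False False2 by (simp add: idx_def pre_append pre_Cons)
        qed
      qed
    qed
    then show ?thesis using Cnd_cong[OF ch] Cons by simp
  qed
qed

lemma pre_map:
  assumes "inj_on F (set w)" "e \<in> set w" "\<forall>a. snd (F a) = snd a"
  shows "pre (map F w) (F e) = pre w e"
  using assms
proof (induction w)
  case Nil then show ?case by simp
next
  case (Cons a l)
  show ?case
  proof (cases "a = e")
    case True then show ?thesis by (simp add: pre_Cons)
  next
    case False
    then have "F a \<noteq> F e" using Cons.prems(1,2) by (meson inj_on_contraD list.set_intros(1))
    moreover have "e \<in> set l" using Cons.prems(2) False by simp
    moreover have "inj_on F (set l)" using Cons.prems(1) by (simp add: inj_on_insert)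
    moreover have "sg (F a) = sg a"
    proof -
      have "snd (F a) = snd a" using Cons.prems(3) by blast
      then show ?thesis by (simp add: sg_def)
    qed
    ultimately show ?thesis using Cons.IH Cons.prems(3) False by (simp add: pre_Cons)
  qed
qed

lemma move_relabel:
  assumes inj: "inj_on f (chords w)"
  defines "F \<equiv> (\<lambda>(c, b). (f c, b))"
  shows "wf_ocd w \<longleftrightarrow> wf_ocd (map F w)"
    and "wf_ocd w \<Longrightarrow> Cnd w \<longleftrightarrow> Cnd (map F w)"
proof -
  have injF: "inj_on F (set w)"
    unfolding inj_on_def F_def
  proof (clarsimp)
    fix a b a' b' assume "(a, b) \<in> set w" "(a', b') \<in> set w" "f a = f a'"
    then show "a = a'" using inj mem_chords by (metis inj_onD)
  qed
  have sF: "\<forall>a. snd (F a) = snd a" by (simp add: F_def split_def)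
  have chF: "chords (map F w) = f ` chords w"
    by (force simp: chords_def F_def image_iff)
  show wfeq: "wf_ocd w \<longleftrightarrow> wf_ocd (map F w)"
  proof
    assume wf: "wf_ocd w"
    show "wf_ocd (map F w)" unfolding wf_ocd_def
    proof (intro conjI allI impI)
      show "distinct (map F w)" using wf injF by (simp add: wf_ocd_def distinct_map)
      fix c b assume "(c, b) \<in> set (map F w)"
      then obtain c0 where "(c0, b) \<in> set w" "c = f c0" by (force simp: F_def)
      then have "(c0, \<not> b) \<in> set w" using wf by (simp add: wf_ocd_def)
      then show "(c, \<not> b) \<in> set (map F w)" using \<open>c = f c0\<close> by (force simp: F_def)
    qed
  next
    assume wf: "wf_ocd (map F w)"
    show "wf_ocd w" unfolding wf_ocd_def
    proof (intro conjI allI impI)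
      show "distinct w" using wf by (simp add: wf_ocd_def distinct_map)
      fix c b assume cb: "(c, b) \<in> set w"
      then have "(f c, b) \<in> set (map F w)" by (force simp: F_def)
      then have "(f c, \<not> b) \<in> set (map F w)" using wf by (simp add: wf_ocd_def)
      then obtain c0 where c0: "(c0, \<not> b) \<in> set w" "f c0 = f c" by (force simp: F_def)
      then have "c0 = c" using inj cb mem_chords by (metis inj_onD)
      then show "(c, \<not> b) \<in> set w" using c0 by simp
    qed
  qed
  assume wf: "wf_ocd w"
  show "Cnd w \<longleftrightarrow> Cnd (map F w)"
  proof (rule Cnd_img[OF chF inj], intro ballI)
    fix x assume x: "x \<in> chords w"
    have "(x, True) \<in> set w" "(x, False) \<in> set w" using wf_both[OF wf x] by auto
    then have "pre (map F w) (F (x, True)) = pre w (x, True)"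
      "pre (map F w) (F (x, False)) = pre w (x, False)"
      using pre_map[OF injF _ sF] by blast+
    then show "idx (map F w) (f x) = idx w x"
      by (simp add: idx_def F_def)
  qed
qed




definition closed_s :: "endpoint set \<Rightarrow> bool" where
  "closed_s S \<longleftrightarrow> (\<forall>c b. (c, b) \<in> S \<longrightarrow> (c, \<not> b) \<in> S)"

lemma wf_split:
  assumes "set w = set m \<union> set l" "distinct w \<longleftrightarrow> distinct l" "closed_s (set m)"
    "fst ` set m \<inter> fst ` set l = {}"
  shows "wf_ocd w \<longleftrightarrow> wf_ocd l"
proof
  assume "wf_ocd w"
  then have d: "distinct l" and cl: "closed_s (set m \<union> set l)"
    using assms(1,2) by (auto simp: wf_ocd_def closed_s_def)
  show "wf_ocd l" unfolding wf_ocd_def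
  proof (intro conjI allI impI d)
    fix c b assume cb: "(c, b) \<in> set l"
    then have "(c, \<not> b) \<in> set m \<union> set l" using cl by (auto simp: closed_s_def)
    moreover have "(c, \<not> b) \<notin> set m" using assms(4) cb by force
    ultimately show "(c, \<not> b) \<in> set l" by blast
  qed
next
  assume "wf_ocd l"
  then show "wf_ocd w" using assms(1,2,3) by (auto simp: wf_ocd_def closed_s_def)
qed

lemma move_R1:
  assumes c: "c \<notin> chords (u @ v)"
  shows "wf_ocd (u @ v) \<longleftrightarrow> wf_ocd (u @ [(c, b), (c, \<not> b)] @ v)"
    and "wf_ocd (u @ v) \<Longrightarrow> Cnd (u @ v) \<longleftrightarrow> Cnd (u @ [(c, b), (c, \<not> b)] @ v)"
proof -
  have nu: "\<And>b. (c, b) \<notin> set u" and nv: "\<And>b. (c, b) \<notin> set v"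
    using notin_chords[OF c] by auto
  show "wf_ocd (u @ v) \<longleftrightarrow> wf_ocd (u @ [(c, b), (c, \<not> b)] @ v)"
    by (rule wf_split[where m = "[(c, b), (c, \<not> b)]", symmetric])
      (use nu nv c in \<open>auto simp: closed_s_def\<close>)
  assume wf: "wf_ocd (u @ v)"
  let ?b = "u @ [(c, b), (c, \<not> b)] @ v"
  show "Cnd (u @ v) \<longleftrightarrow> Cnd ?b"
  proof (rule Cnd_ins1[where p = c])
    show "chords ?b = insert c (chords (u @ v))" by auto
    show "c \<notin> chords (u @ v)" by fact
    show "\<forall>x\<in>chords (u @ v). idx ?b x = idx (u @ v) x"
    proof
      fix x assume "x \<in> chords (u @ v)"
      then have "x \<noteq> c" using c by auto
      then show "idx ?b x = idx (u @ v) x" by (simp add: idx_def pre_append pre_Cons)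
    qed
    show "idx ?b c = 0" using nu by (cases b) (simp_all add: idx_def pre_append pre_Cons)
  qed
qed

lemma move_R2:
  assumes pq: "p \<noteq> q" "p \<notin> chords (u @ v @ t)" "q \<notin> chords (u @ v @ t)"
    and bb: "b' = [(p, \<not> b), (q, b)] \<or> b' = [(q, b), (p, \<not> b)]"
  shows "wf_ocd (u @ v @ t) \<longleftrightarrow> wf_ocd (u @ [(p, b), (q, \<not> b)] @ v @ b' @ t)"
    and "wf_ocd (u @ v @ t) \<Longrightarrow> Cnd (u @ v @ t) \<longleftrightarrow> Cnd (u @ [(p, b), (q, \<not> b)] @ v @ b' @ t)"
proof -
  have n: "\<And>b. (p, b) \<notin> set u" "\<And>b. (p, b) \<notin> set v" "\<And>b. (p, b) \<notin> set t"
    "\<And>b. (q, b) \<notin> set u" "\<And>b. (q, b) \<notin> set v" "\<And>b. (q, b) \<notin> set t"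
    using notin_chords[OF pq(2)] notin_chords[OF pq(3)] by auto
  have "set b' = {(p, \<not> b), (q, b)}" using bb by auto
  show "wf_ocd (u @ v @ t) \<longleftrightarrow> wf_ocd (u @ [(p, b), (q, \<not> b)] @ v @ b' @ t)"
    by (rule wf_split[where m = "[(p, b), (q, \<not> b), (p, \<not> b), (q, b)]", symmetric])
      (use n pq \<open>set b' = _\<close> bb in \<open>auto simp: closed_s_def\<close>)
  assume wf: "wf_ocd (u @ v @ t)"
  let ?b = "u @ [(p, b), (q, \<not> b)] @ v @ b' @ t"
  show "Cnd (u @ v @ t) \<longleftrightarrow> Cnd ?b"
  proof (rule Cnd_ins2[where p = p and q = q])
    show "chords ?b = insert p (insert q (chords (u @ v @ t)))" using bb by auto
    show "p \<noteq> q" "p \<notin> chords (u @ v @ t)" "q \<notin> chords (u @ v @ t)" by fact+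
    show "\<forall>x\<in>chords (u @ v @ t). idx ?b x = idx (u @ v @ t) x"
    proof
      fix x assume "x \<in> chords (u @ v @ t)"
      then have "x \<noteq> p" "x \<noteq> q" using pq by auto
      then show "idx ?b x = idx (u @ v @ t) x" using bb
        by (elim disjE) (simp_all add: idx_def pre_append pre_Cons)
    qed
    show "idx ?b p = - idx ?b q" using n bb pq(1)
      by (cases b; elim disjE) (simp_all add: idx_def pre_append pre_Cons)
  qed
qed

lemma r3_idx_x:
  fixes x y z :: nat and e1 e2 e3 s :: int and U :: int
  assumes d: "x \<noteq> y" "x \<noteq> z" "y \<noteq> z"
    and e: "e1 = 1 \<or> e1 = -1" "e2 = 1 \<or> e2 = -1" "e3 = 1 \<or> e3 = -1" "s = 1 \<or> s = -1"
  defines "s1 \<equiv> r3_seg1 x y z e1 e2 e3 s" and "s2 \<equiv> r3_seg2 x y z e1 e2 e3 s"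
  shows "(if (x,True) \<in> set s1 then pre (rev s1) (x,True) else ssum s1 + U + pre (rev s2) (x,True))
       - (if (x,False) \<in> set s1 then pre (rev s1) (x,False) else ssum s1 + U + pre (rev s2) (x,False))
       = (if (x,True) \<in> set s1 then pre s1 (x,True) else ssum s1 + U + pre s2 (x,True))
       - (if (x,False) \<in> set s1 then pre s1 (x,False) else ssum s1 + U + pre s2 (x,False))"
  using e d unfolding s1_def s2_def r3_seg1_def r3_seg2_def tsg_def
  by (elim disjE; simp add: pre_Cons)

lemma r3_idx_y:
  fixes x y z :: nat and e1 e2 e3 s :: int and U :: int
  assumes d: "x \<noteq> y" "x \<noteq> z" "y \<noteq> z"
    and e: "e1 = 1 \<or> e1 = -1" "e2 = 1 \<or> e2 = -1" "e3 = 1 \<or> e3 = -1" "s = 1 \<or> s = -1"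
  defines "s1 \<equiv> r3_seg1 x y z e1 e2 e3 s" and "s3 \<equiv> r3_seg3 x y z e1 e2 e3 s"
  shows "(if (y,True) \<in> set s1 then pre (rev s1) (y,True) else ssum s1 + U + pre (rev s3) (y,True))
       - (if (y,False) \<in> set s1 then pre (rev s1) (y,False) else ssum s1 + U + pre (rev s3) (y,False))
       = (if (y,True) \<in> set s1 then pre s1 (y,True) else ssum s1 + U + pre s3 (y,True))
       - (if (y,False) \<in> set s1 then pre s1 (y,False) else ssum s1 + U + pre s3 (y,False))"
  using e d unfolding s1_def s3_def r3_seg1_def r3_seg3_def tsg_def
  by (elim disjE; simp add: pre_Cons)

lemma r3_idx_z:
  fixes x y z :: nat and e1 e2 e3 s :: int and U :: int
  assumes d: "x \<noteq> y" "x \<noteq> z" "y \<noteq> z"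
    and e: "e1 = 1 \<or> e1 = -1" "e2 = 1 \<or> e2 = -1" "e3 = 1 \<or> e3 = -1" "s = 1 \<or> s = -1"
  defines "s2 \<equiv> r3_seg2 x y z e1 e2 e3 s" and "s3 \<equiv> r3_seg3 x y z e1 e2 e3 s"
  shows "(if (z,True) \<in> set s2 then pre (rev s2) (z,True) else ssum s2 + U + pre (rev s3) (z,True))
       - (if (z,False) \<in> set s2 then pre (rev s2) (z,False) else ssum s2 + U + pre (rev s3) (z,False))
       = (if (z,True) \<in> set s2 then pre s2 (z,True) else ssum s2 + U + pre s3 (z,True))
       - (if (z,False) \<in> set s2 then pre s2 (z,False) else ssum s2 + U + pre s3 (z,False))"
  using e d unfolding s2_def s3_def r3_seg2_def r3_seg3_def tsg_def
  by (elim disjE; simp add: pre_Cons)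

lemma pre_X:
  assumes "e \<notin> set u" "e \<notin> set v" "e \<notin> set t" "e \<notin> set s3" "e \<in> set s1 \<union> set s2"
  shows "pre (s1 @ u @ s2 @ v @ s3 @ t) e = (if e \<in> set s1 then pre s1 e else ssum s1 + ssum u + pre s2 e)"
  using assms by (auto simp: pre_append)

lemma pre_Y:
  assumes "e \<notin> set u" "e \<notin> set v" "e \<notin> set t" "e \<notin> set s2" "e \<in> set s1 \<union> set s3"
  shows "pre (s1 @ u @ s2 @ v @ s3 @ t) e = (if e \<in> set s1 then pre s1 e else ssum s1 + (ssum u + ssum s2 + ssum v) + pre s3 e)"
  using assms by (auto simp: pre_append)

lemma pre_Z:
  assumes "e \<notin> set u" "e \<notin> set v" "e \<notin> set t" "e \<notin> set s1" "e \<in> set s2 \<union> set s3"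
  shows "pre (s1 @ u @ s2 @ v @ s3 @ t) e = ssum s1 + ssum u + (if e \<in> set s2 then pre s2 e else ssum s2 + ssum v + pre s3 e)"
  using assms by (auto simp: pre_append)

lemma r3_e: "e \<in> {1, -1::int} \<Longrightarrow> e = 1 \<or> e = -1" by auto

lemma r3_sx:
  assumes "e1 = 1 \<or> e1 = -1" "e2 = 1 \<or> e2 = -1" "e3 = 1 \<or> e3 = -1" "s = 1 \<or> s = -1"
  shows "(x, b) \<in> set (r3_seg1 x y z e1 e2 e3 s) \<union> set (r3_seg2 x y z e1 e2 e3 s)"
    and "(y, b) \<in> set (r3_seg1 x y z e1 e2 e3 s) \<union> set (r3_seg3 x y z e1 e2 e3 s)"
    and "(z, b) \<in> set (r3_seg2 x y z e1 e2 e3 s) \<union> set (r3_seg3 x y z e1 e2 e3 s)"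
  using assms unfolding r3_seg1_def r3_seg2_def r3_seg3_def tsg_def
  by (elim disjE; auto)+

lemma r3_m:
  shows "(c, b) \<in> set (r3_seg1 x y z e1 e2 e3 s) \<Longrightarrow> c = x \<or> c = y"
    and "(c, b) \<in> set (r3_seg2 x y z e1 e2 e3 s) \<Longrightarrow> c = x \<or> c = z"
    and "(c, b) \<in> set (r3_seg3 x y z e1 e2 e3 s) \<Longrightarrow> c = z \<or> c = y"
  unfolding r3_seg1_def r3_seg2_def r3_seg3_def
  by (auto split: if_splits)

lemma r3_disj:
  assumes "distinct (s1 @ u @ s2 @ v @ s3 @ t)"
  shows "\<And>e. e \<in> set s1 \<Longrightarrow> e \<notin> set u \<and> e \<notin> set v \<and> e \<notin> set t \<and> e \<notin> set s2 \<and> e \<notin> set s3"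
    and "\<And>e. e \<in> set s2 \<Longrightarrow> e \<notin> set u \<and> e \<notin> set v \<and> e \<notin> set t \<and> e \<notin> set s3"
    and "\<And>e. e \<in> set s3 \<Longrightarrow> e \<notin> set u \<and> e \<notin> set v \<and> e \<notin> set t"
  using assms by auto

lemma wf_ocd_cong: "set a = set b \<Longrightarrow> distinct a = distinct b \<Longrightarrow> wf_ocd a = wf_ocd b"
  by (simp add: wf_ocd_def)

lemma move_R3:
  fixes x y z :: nat and e1 e2 e3 s :: int
  assumes d: "x \<noteq> y" "x \<noteq> z" "y \<noteq> z"
    and e0: "e1 \<in> {1, -1}" "e2 \<in> {1, -1}" "e3 \<in> {1, -1}" "s \<in> {1, -1}"
  defines "s1 \<equiv> r3_seg1 x y z e1 e2 e3 s" and "s2 \<equiv> r3_seg2 x y z e1 e2 e3 s"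
    and "s3 \<equiv> r3_seg3 x y z e1 e2 e3 s"
  shows "wf_ocd (s1 @ u @ s2 @ v @ s3 @ t) \<longleftrightarrow> wf_ocd (rev s1 @ u @ rev s2 @ v @ rev s3 @ t)"
    and "wf_ocd (s1 @ u @ s2 @ v @ s3 @ t) \<Longrightarrow>
      Cnd (s1 @ u @ s2 @ v @ s3 @ t) \<longleftrightarrow> Cnd (rev s1 @ u @ rev s2 @ v @ rev s3 @ t)"
proof -
  have e: "e1 = 1 \<or> e1 = -1" "e2 = 1 \<or> e2 = -1" "e3 = 1 \<or> e3 = -1" "s = 1 \<or> s = -1"
    using e0 by auto
  let ?a = "s1 @ u @ s2 @ v @ s3 @ t" and ?b = "rev s1 @ u @ rev s2 @ v @ rev s3 @ t"
  show "wf_ocd ?a \<longleftrightarrow> wf_ocd ?b" by (rule wf_ocd_cong) auto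
  assume wf: "wf_ocd ?a"
  have dist: "distinct ?a" using wf by (simp add: wf_ocd_def)
  note sx = r3_sx[OF e, where x=x and y=y and z=z, folded s1_def s2_def s3_def]
  note sm = r3_m[of _ _ x y z e1 e2 e3 s, folded s1_def s2_def s3_def]
  note dj = r3_disj[OF dist]
  have nx: "(x, b) \<notin> set u \<and> (x, b) \<notin> set v \<and> (x, b) \<notin> set t \<and> (x, b) \<notin> set s3" for b
    using sx(1)[of b] sm(3)[of x b] dj(1,2)[of "(x, b)"] d by blast
  have ny: "(y, b) \<notin> set u \<and> (y, b) \<notin> set v \<and> (y, b) \<notin> set t \<and> (y, b) \<notin> set s2" for b
    using sx(2)[of b] sm(2)[of y b] dj(1,3)[of "(y, b)"] d by blast
  have nz: "(z, b) \<notin> set u \<and> (z, b) \<notin> set v \<and> (z, b) \<notin> set t \<and> (z, b) \<notin> set s1" for b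
    using sx(3)[of b] sm(1)[of z b] dj(2,3)[of "(z, b)"] d by blast
  show "Cnd ?a \<longleftrightarrow> Cnd ?b"
  proof (rule Cnd_cong)
    show "chords ?b = chords ?a" by simp
    show "\<forall>w\<in>chords ?a. idx ?b w = idx ?a w"
    proof
      fix w assume "w \<in> chords ?a"
      show "idx ?b w = idx ?a w"
      proof (cases "w \<in> {x, y, z}")
        case False
        then have "\<And>b. (w, b) \<notin> set s1 \<and> (w, b) \<notin> set s2 \<and> (w, b) \<notin> set s3"
          using sm by blast
        then show ?thesis by (simp add: idx_def pre_append)
      next
        case True
        have ex: "idx ?b x = idx ?a x"
        proof -
          have "idx ?a x = (if (x,True) \<in> set s1 then pre s1 (x,True) else ssum s1 + ssum u + pre s2 (x,True))
            - (if (x,False) \<in> set s1 then pre s1 (x,False) else ssum s1 + ssum u + pre s2 (x,False)) + 1"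
            unfolding idx_def using pre_X nx sx(1) by simp
          moreover have "idx ?b x = (if (x,True) \<in> set s1 then pre (rev s1) (x,True) else ssum s1 + ssum u + pre (rev s2) (x,True))
            - (if (x,False) \<in> set s1 then pre (rev s1) (x,False) else ssum s1 + ssum u + pre (rev s2) (x,False)) + 1"
            unfolding idx_def using pre_X[of _ u v t "rev s3" "rev s1" "rev s2"] nx sx(1) by simp
          ultimately show ?thesis using r3_idx_x[OF d e, of "ssum u", folded s1_def s2_def] by simp
        qed
        have ey: "idx ?b y = idx ?a y"
        proof -
          have "idx ?a y = (if (y,True) \<in> set s1 then pre s1 (y,True) else ssum s1 + (ssum u + ssum s2 + ssum v) + pre s3 (y,True))
            - (if (y,False) \<in> set s1 then pre s1 (y,False) else ssum s1 + (ssum u + ssum s2 + ssum v) + pre s3 (y,False)) + 1"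
            unfolding idx_def using pre_Y ny sx(2) by simp
          moreover have "idx ?b y = (if (y,True) \<in> set s1 then pre (rev s1) (y,True) else ssum s1 + (ssum u + ssum s2 + ssum v) + pre (rev s3) (y,True))
            - (if (y,False) \<in> set s1 then pre (rev s1) (y,False) else ssum s1 + (ssum u + ssum s2 + ssum v) + pre (rev s3) (y,False)) + 1"
            unfolding idx_def using pre_Y[of _ u v t "rev s2" "rev s1" "rev s3"] ny sx(2) by simp
          ultimately show ?thesis using r3_idx_y[OF d e, of "ssum u + ssum s2 + ssum v", folded s1_def s3_def] by simp
        qed
        have ez: "idx ?b z = idx ?a z"
        proof -
          have "idx ?a z = (if (z,True) \<in> set s2 then pre s2 (z,True) else ssum s2 + ssum v + pre s3 (z,True))
            - (if (z,False) \<in> set s2 then pre s2 (z,False) else ssum s2 + ssum v + pre s3 (z,False)) + 1"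
            unfolding idx_def using pre_Z nz sx(3) by simp
          moreover have "idx ?b z = (if (z,True) \<in> set s2 then pre (rev s2) (z,True) else ssum s2 + ssum v + pre (rev s3) (z,True))
            - (if (z,False) \<in> set s2 then pre (rev s2) (z,False) else ssum s2 + ssum v + pre (rev s3) (z,False)) + 1"
            unfolding idx_def using pre_Z[of _ u v t "rev s1" "rev s2" "rev s3"] nz sx(3) by simp
          ultimately show ?thesis using r3_idx_z[OF d e, of "ssum v", folded s2_def s3_def] by simp
        qed
        show ?thesis using True ex ey ez by auto
      qed
    qed
  qed
qed


lemma move_inv:
  assumes "flat_move a b"
  shows "(wf_ocd a \<longleftrightarrow> wf_ocd b) \<and> (wf_ocd a \<longrightarrow> (Cnd a \<longleftrightarrow> Cnd b))"
  using assms
proof (induction rule: flat_move.induct)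
  case (rotate w) then show ?case using move_rotate by blast
next
  case (relabel f w) then show ?case using move_relabel[OF relabel] by blast
next
  case (R1 c u v b) then show ?case using move_R1[OF R1] by blast
next
  case (R2_par p q u v t b) then show ?case using move_R2[OF R2_par, of "[(p, \<not> b), (q, b)]" b] by simp
next
  case (R2_anti p q u v t b) then show ?case using move_R2[OF R2_anti, of "[(q, b), (p, \<not> b)]" b] by simp
next
  case (R3 x y z e1 e2 e3 s u v t) then show ?case using move_R3[OF R3, of u v t] by blast
qed

lemma equiv_inv:
  assumes "equivclp flat_move [] w"
  shows "wf_ocd w \<and> Cnd w"
  using assms unfolding equivclp_def
proof (induction rule: rtranclp_induct)
  case base then show ?case by (simp add: wf_ocd_def Cnd_def)
next
  case (step y z)
  from step.hyps(2) show ?case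
  proof (cases rule: symclpE)
    case base then show ?thesis using move_inv step.IH by blast
  next
    case sym then show ?thesis using move_inv step.IH by blast
  qed
qed

lemma flat_equiv_Cnd: "flat_equiv w [] \<Longrightarrow> wf_ocd w \<and> Cnd w"
  using equiv_inv equivclp_sym unfolding flat_equiv_def by metis




lemma no_zero_sgn:
  fixes f f' :: "real \<Rightarrow> real"
  assumes der: "\<And>x. (f has_real_derivative f' x) (at x)"
    and le: "a \<le> b" and nz: "\<And>x. a \<le> x \<Longrightarrow> x \<le> b \<Longrightarrow> f x \<noteq> 0"
  shows "sgn (f b) = sgn (f a)"
proof -
  have c: "\<forall>x. a \<le> x \<and> x \<le> b \<longrightarrow> isCont f x" using der DERIV_isCont by blast
  have fa: "f a \<noteq> 0" and fb: "f b \<noteq> 0" using nz le by auto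
  show ?thesis
  proof (rule ccontr)
    assume "sgn (f b) \<noteq> sgn (f a)"
    then have "(f a < 0 \<and> 0 < f b) \<or> (f b < 0 \<and> 0 < f a)" using fa fb
      by (metis linorder_neqE_linordered_idom sgn_neg sgn_pos)
    then show False
    proof
      assume "f a < 0 \<and> 0 < f b"
      then obtain x where "a \<le> x" "x \<le> b" "f x = 0" using IVT[of f a 0 b] c le by force
      then show False using nz by blast
    next
      assume "f b < 0 \<and> 0 < f a"
      then obtain x where "a \<le> x" "x \<le> b" "f x = 0" using IVT2[of f b 0 a] c le by force
      then show False using nz by blast
    qed
  qed
qed

lemma sgn_right:
  fixes f f' :: "real \<Rightarrow> real"
  assumes der: "\<And>x. (f has_real_derivative f' x) (at x)"
    and z: "f z = 0" "f' z \<noteq> 0" "z < b"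
    and nz: "\<And>x. z < x \<Longrightarrow> x \<le> b \<Longrightarrow> f x \<noteq> 0"
  shows "sgn (f b) = sgn (f' z)"
proof -
  have "\<exists>y. z < y \<and> y \<le> b \<and> sgn (f y) = sgn (f' z)"
  proof (cases "f' z > 0")
    case True
    then obtain d where d: "d > 0" "\<And>h. h > 0 \<Longrightarrow> h < d \<Longrightarrow> f z < f (z + h)"
      using DERIV_pos_inc_right[OF der True] by blast
    define h where "h = min d (b - z) / 2"
    have M: "0 < min d (b - z)" "min d (b - z) \<le> d" "min d (b - z) \<le> b - z" using d z by auto
    then have "h > 0" "h < d" "z + h \<le> b" unfolding h_def by (auto simp: field_simps)
    then show ?thesis using d(2)[of h] z True by (intro exI[of _ "z + h"]) auto
  next
    case False
    then have neg: "f' z < 0" using z by auto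
    then obtain d where d: "d > 0" "\<And>h. h > 0 \<Longrightarrow> h < d \<Longrightarrow> f (z + h) < f z"
      using DERIV_neg_dec_right[OF der neg] by blast
    define h where "h = min d (b - z) / 2"
    have M: "0 < min d (b - z)" "min d (b - z) \<le> d" "min d (b - z) \<le> b - z" using d z by auto
    then have "h > 0" "h < d" "z + h \<le> b" unfolding h_def by (auto simp: field_simps)
    then show ?thesis using d(2)[of h] z neg by (intro exI[of _ "z + h"]) auto
  qed
  then obtain y where y: "z < y" "y \<le> b" "sgn (f y) = sgn (f' z)" by blast
  have "sgn (f b) = sgn (f y)" by (rule no_zero_sgn[OF der y(2)]) (use nz y in auto)
  then show ?thesis using y by simp
qed

lemma sgn_left:
  fixes f f' :: "real \<Rightarrow> real"
  assumes der: "\<And>x. (f has_real_derivative f' x) (at x)"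
    and z: "f z = 0" "f' z \<noteq> 0" "m < z"
  shows "\<exists>y. m < y \<and> y < z \<and> sgn (f y) = - sgn (f' z) \<and> (\<forall>x. y \<le> x \<and> x < z \<longrightarrow> f x \<noteq> 0)"
proof (cases "f' z > 0")
  case True
  then obtain d where d: "d > 0" "\<And>h. h > 0 \<Longrightarrow> h < d \<Longrightarrow> f (z - h) < f z"
    using DERIV_pos_inc_left[OF der True] by blast
  define h where "h = min d (z - m) / 2"
  have M: "0 < min d (z - m)" "min d (z - m) \<le> d" "min d (z - m) \<le> z - m" using d z by auto
  then have h: "h > 0" "h < d" "z - h > m" unfolding h_def by (auto simp: field_simps)
  have "\<forall>x. z - h \<le> x \<and> x < z \<longrightarrow> f x \<noteq> 0"
  proof (intro allI impI)
    fix x assume "z - h \<le> x \<and> x < z"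
    then have "f (z - (z - x)) < f z" using d(2)[of "z - x"] h by auto
    then show "f x \<noteq> 0" using z by simp
  qed
  then show ?thesis using d(2)[of h] z True h by (intro exI[of _ "z - h"]) auto
next
  case False
  then have neg: "f' z < 0" using z by auto
  then obtain d where d: "d > 0" "\<And>h. h > 0 \<Longrightarrow> h < d \<Longrightarrow> f z < f (z - h)"
    using DERIV_neg_dec_left[OF der neg] by blast
  define h where "h = min d (z - m) / 2"
  have M: "0 < min d (z - m)" "min d (z - m) \<le> d" "min d (z - m) \<le> z - m" using d z by auto
  then have h: "h > 0" "h < d" "z - h > m" unfolding h_def by (auto simp: field_simps)
  have "\<forall>x. z - h \<le> x \<and> x < z \<longrightarrow> f x \<noteq> 0"
  proof (intro allI impI)
    fix x assume "z - h \<le> x \<and> x < z"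
    then have "f z < f (z - (z - x))" using d(2)[of "z - x"] h by auto
    then show "f x \<noteq> 0" using z by simp
  qed
  then show ?thesis using d(2)[of h] z neg h by (intro exI[of _ "z - h"]) auto
qed

lemma zero_count:
  fixes f f' :: "real \<Rightarrow> real"
  assumes der: "\<And>x. (f has_real_derivative f' x) (at x)"
  shows "card {z \<in> {lo..hi}. f z = 0} = n \<Longrightarrow> lo < hi \<Longrightarrow> f lo \<noteq> 0 \<Longrightarrow> f hi \<noteq> 0 \<Longrightarrow>
    finite {z \<in> {lo..hi}. f z = 0} \<Longrightarrow> (\<forall>z\<in>{lo..hi}. f z = 0 \<longrightarrow> f' z \<noteq> 0) \<Longrightarrow>
    2 * (\<Sum>z\<in>{z \<in> {lo..hi}. f z = 0}. sgn (f' z)) = sgn (f hi) - sgn (f lo)"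
proof (induction n arbitrary: hi)
  case 0
  then have e: "{z \<in> {lo..hi}. f z = 0} = {}" by simp
  then have "sgn (f hi) = sgn (f lo)" using no_zero_sgn[OF der, of lo hi] 0 by auto
  then show ?case unfolding e by simp
next
  case (Suc n)
  let ?Z = "{z \<in> {lo..hi}. f z = 0}"
  have ne: "?Z \<noteq> {}" using Suc.prems(1) by (metis Zero_not_Suc card.empty)
  define z where "z = Max ?Z"
  have zZ: "z \<in> ?Z" unfolding z_def using Suc.prems(5) ne by (rule Max_in)
  have zmax: "\<And>x. x \<in> ?Z \<Longrightarrow> x \<le> z" unfolding z_def using Suc.prems(5) by simp
  have zlo: "lo < z" and zhi: "z < hi"
    using zZ Suc.prems(3,4) by (auto simp: order_le_less)
  have fz: "f z = 0" "f' z \<noteq> 0" using zZ Suc.prems(6) by auto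
  have right: "sgn (f hi) = sgn (f' z)"
  proof (rule sgn_right[OF der fz zhi])
    fix x assume "z < x" "x \<le> hi"
    then show "f x \<noteq> 0" using zmax[of x] zlo by auto
  qed
  define Z' where "Z' = ?Z - {z}"
  have fZ': "finite Z'" unfolding Z'_def using Suc.prems(5) by simp
  have Z'lt: "\<And>x. x \<in> Z' \<Longrightarrow> x < z" unfolding Z'_def using zmax by force
  define m where "m = (if Z' = {} then lo else max lo (Max Z'))"
  have mz: "m < z" unfolding m_def using zlo Z'lt fZ' by (auto simp: Max_less_iff)
  have mge: "\<And>x. x \<in> Z' \<Longrightarrow> x \<le> m"
  proof -
    fix x assume x: "x \<in> Z'"
    have "x \<le> Max Z'" by (rule Max_ge[OF fZ' x])
    then show "x \<le> m" unfolding m_def using x by auto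
  qed
  have mlo: "lo \<le> m" unfolding m_def by auto
  obtain y where y: "m < y" "y < z" "sgn (f y) = - sgn (f' z)"
    and ynz: "\<forall>x. y \<le> x \<and> x < z \<longrightarrow> f x \<noteq> 0"
    using sgn_left[OF der fz mz] by blast
  have fy: "f y \<noteq> 0" using y(3) fz(2) by (auto simp: sgn_0_0)
  have Zy: "{x \<in> {lo..y}. f x = 0} = Z'"
  proof
    show "{x \<in> {lo..y}. f x = 0} \<subseteq> Z'" unfolding Z'_def using y zhi by auto
    show "Z' \<subseteq> {x \<in> {lo..y}. f x = 0}"
    proof
      fix x assume x: "x \<in> Z'"
      then have "x \<le> m" by (rule mge)
      then show "x \<in> {x \<in> {lo..y}. f x = 0}" using x y unfolding Z'_def by auto
    qed
  qed
  have cZ': "card Z' = n" unfolding Z'_def using Suc.prems(1,5) zZ by simp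
  have IH: "2 * (\<Sum>x\<in>Z'. sgn (f' x)) = sgn (f y) - sgn (f lo)"
  proof -
    have "\<forall>x\<in>{lo..y}. f x = 0 \<longrightarrow> f' x \<noteq> 0" using Suc.prems(6) y zhi by auto
    moreover have "lo < y" using mlo y by auto
    ultimately show ?thesis using Suc.IH[of y] Zy cZ' Suc.prems(3) fy fZ' by auto
  qed
  have "(\<Sum>x\<in>?Z. sgn (f' x)) = sgn (f' z) + (\<Sum>x\<in>Z'. sgn (f' x))"
    using sum.remove[OF Suc.prems(5) zZ] unfolding Z'_def by simp
  then show ?case using IH y(3) right by simp
qed




definition gg :: "(nat \<Rightarrow> real) \<Rightarrow> (nat \<Rightarrow> real) \<Rightarrow> nat \<Rightarrow> real \<Rightarrow> real" where
  "gg A B x t = (t - A x) * (B x - t)"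
definition gd :: "(nat \<Rightarrow> real) \<Rightarrow> (nat \<Rightarrow> real) \<Rightarrow> nat \<Rightarrow> real \<Rightarrow> real" where
  "gd A B x t = A x + B x - 2 * t"

definition sep :: "nat set \<Rightarrow> (nat \<Rightarrow> real) \<Rightarrow> (nat \<Rightarrow> real) \<Rightarrow> bool" where
  "sep X A B \<longleftrightarrow> (\<forall>x\<in>X. A x \<noteq> B x) \<and>
     (\<forall>x\<in>X. \<forall>y\<in>X. x \<noteq> y \<longrightarrow> A x \<noteq> A y \<and> A x \<noteq> B y \<and> B x \<noteq> A y \<and> B x \<noteq> B y)"

definition good :: "nat set \<Rightarrow> (nat \<Rightarrow> real) \<Rightarrow> (nat \<Rightarrow> real) \<Rightarrow> (nat \<Rightarrow> real) \<Rightarrow> bool" where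
  "good X A B c \<longleftrightarrow> (\<forall>x\<in>X. 0 < c x \<and> c x < 1/100) \<and>
    (\<forall>x\<in>X. \<forall>y\<in>X. x \<noteq> y \<longrightarrow> (\<forall>t. c x * gg A B x t = c y * gg A B y t \<longrightarrow> c x * gd A B x t \<noteq> c y * gd A B y t)) \<and>
    (\<forall>x\<in>X. \<forall>y\<in>X. \<forall>z\<in>X. x \<noteq> y \<longrightarrow> x \<noteq> z \<longrightarrow> y \<noteq> z \<longrightarrow>
       (\<forall>t. \<not> (c x * gg A B x t = c y * gg A B y t \<and> c x * gg A B x t = c z * gg A B z t)))"

definition Pg :: "(nat \<Rightarrow> real) \<Rightarrow> (nat \<Rightarrow> real) \<Rightarrow> nat \<Rightarrow> real poly" where
  "Pg A B x = [: - (A x * B x), A x + B x, -1 :]"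
definition Pd :: "(nat \<Rightarrow> real) \<Rightarrow> (nat \<Rightarrow> real) \<Rightarrow> nat \<Rightarrow> real poly" where
  "Pd A B x = [: A x + B x, -2 :]"

lemma poly_Pg: "poly (Pg A B x) t = gg A B x t"
  by (simp add: Pg_def gg_def algebra_simps)
lemma poly_Pd: "poly (Pd A B x) t = gd A B x t"
  by (simp add: Pd_def gd_def algebra_simps)

lemma gg_zero: "gg A B x t = 0 \<longleftrightarrow> t = A x \<or> t = B x"
  by (auto simp: gg_def)

lemma sep_sub: "sep (insert x X) A B \<Longrightarrow> sep X A B"
  by (auto simp: sep_def)

lemma finite_meet:
  assumes "sep X A B" "x \<in> X" "y \<in> X" "x \<noteq> y" "cx \<noteq> 0" "cy \<noteq> 0"
  shows "finite {t. cx * gg A B x t = cy * gg A B y t}"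
proof -
  define p where "p = smult cx (Pg A B x) - smult cy (Pg A B y)"
  have e: "{t. cx * gg A B x t = cy * gg A B y t} = {t. poly p t = 0}"
    by (auto simp: p_def poly_Pg)
  have "gg A B y (A x) \<noteq> 0" using assms unfolding sep_def gg_zero by metis
  then have "poly p (A x) \<noteq> 0" using assms(6) by (simp add: p_def poly_Pg gg_def)
  then have "p \<noteq> 0" by auto
  then show ?thesis unfolding e by (rule poly_roots_finite)
qed

lemma finite_wr:
  assumes "sep X A B" "x \<in> X" "y \<in> X" "x \<noteq> y"
  shows "finite {t. gg A B x t * gd A B y t - gg A B y t * gd A B x t = 0}"
proof -
  define p where "p = Pg A B x * Pd A B y - Pg A B y * Pd A B x"
  have e: "{t. gg A B x t * gd A B y t - gg A B y t * gd A B x t = 0} = {t. poly p t = 0}"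
    by (auto simp: p_def poly_Pg poly_Pd)
  have "gg A B y (A x) \<noteq> 0" using assms unfolding sep_def gg_zero by metis
  moreover have "gd A B x (A x) \<noteq> 0" using assms unfolding sep_def gd_def by auto
  ultimately have "poly p (A x) \<noteq> 0" by (simp add: p_def poly_Pg poly_Pd gg_def)
  then have "p \<noteq> 0" by auto
  then show ?thesis unfolding e by (rule poly_roots_finite)
qed

lemma gg_nz:
  assumes "sep X A B" "x \<in> X" "y \<in> X" "x \<noteq> y" "cy \<noteq> 0"
    and "v * gg A B x t = cy * gg A B y t"
  shows "gg A B x t \<noteq> 0"
proof
  assume g: "gg A B x t = 0"
  then have "gg A B y t = 0" using assms(5,6) by simp
  then show False using g assms(1-4) unfolding gg_zero sep_def by metis
qed

lemma good_exists:
  assumes "finite X" "sep X A B"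
  shows "\<exists>c. good X A B c"
  using assms
proof (induction X rule: finite_induct)
  case empty
  show ?case by (rule exI[of _ "\<lambda>_. 1/200"]) (simp add: good_def)
next
  case (insert x X)
  have sX: "sep X A B" using sep_sub insert.prems by blast
  obtain c where c: "good X A B c" using insert.IH[OF sX] by blast
  let ?r = "\<lambda>y t. c y * gg A B y t / gg A B x t"
  define Bad1 where "Bad1 = (\<Union>y\<in>X. ?r y ` {t. gg A B x t * gd A B y t - gg A B y t * gd A B x t = 0})"
  define Bad2 where "Bad2 = (\<Union>y\<in>X. \<Union>z\<in>X - {y}. ?r y ` {t. c y * gg A B y t = c z * gg A B z t})"
  have cpos: "\<And>y. y \<in> X \<Longrightarrow> 0 < c y \<and> c y < 1/100" using c by (simp add: good_def)
  have f1: "finite Bad1" unfolding Bad1_def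
    using finite_wr[OF insert.prems] insert.hyps(2) insert.hyps(1) by auto
  have f2: "finite Bad2" unfolding Bad2_def
  proof (intro finite_UN_I insert.hyps(1) finite_Diff finite_imageI)
    fix y z assume "y \<in> X" "z \<in> X - {y}"
    then show "finite {t. c y * gg A B y t = c z * gg A B z t}"
      using finite_meet[OF sX, of y z "c y" "c z"] cpos by force
  qed
  have "infinite ({0<..<1/100::real} - (Bad1 \<union> Bad2))"
    using f1 f2 by (intro Diff_infinite_finite) (auto simp: infinite_Ioo)
  then obtain v where v: "v \<in> {0<..<1/100::real}" "v \<notin> Bad1" "v \<notin> Bad2"
    by (metis Diff_iff UnI1 UnI2 finite.emptyI ex_in_conv)
  define c' where "c' = c(x := v)"
  have ctang: "\<And>y z t. y \<in> X \<Longrightarrow> z \<in> X \<Longrightarrow> y \<noteq> z \<Longrightarrow> c y * gg A B y t = c z * gg A B z t \<Longrightarrow> c y * gd A B y t \<noteq> c z * gd A B z t"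
    using c unfolding good_def by blast
  have ctrip: "\<And>y z w t. y \<in> X \<Longrightarrow> z \<in> X \<Longrightarrow> w \<in> X \<Longrightarrow> y \<noteq> z \<Longrightarrow> y \<noteq> w \<Longrightarrow> z \<noteq> w \<Longrightarrow>
      c y * gg A B y t = c z * gg A B z t \<Longrightarrow> c y * gg A B y t = c w * gg A B w t \<Longrightarrow> False"
    using c unfolding good_def by blast
  have c'X: "\<And>y. y \<in> X \<Longrightarrow> c' y = c y" using insert.hyps(2) unfolding c'_def by auto
  have c'x: "c' x = v" unfolding c'_def by simp
  have tang: False if y: "y \<in> X" and e1: "v * gg A B x t = c y * gg A B y t"
      and e2: "v * gd A B x t = c y * gd A B y t" for y t
  proof -
    have xy: "x \<noteq> y" using y insert.hyps(2) by auto
    have cy: "c y \<noteq> 0" using cpos y by force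
    have gx: "gg A B x t \<noteq> 0" using gg_nz[OF insert.prems _ _ xy cy e1] y by auto
    have "v * c y * (gg A B x t * gd A B y t - gg A B y t * gd A B x t)
        = (v * gg A B x t) * (c y * gd A B y t) - (c y * gg A B y t) * (v * gd A B x t)"
      by (simp add: algebra_simps)
    also have "\<dots> = 0" using e1 e2 by simp
    finally have "gg A B x t * gd A B y t - gg A B y t * gd A B x t = 0"
      using v(1) cy by simp
    moreover have "v = ?r y t" using e1 gx by (simp add: field_simps)
    ultimately have "v \<in> Bad1" unfolding Bad1_def using y by blast
    then show False using v by blast
  qed
  have trip: False if y: "y \<in> X" "z \<in> X" "y \<noteq> z" and e1: "v * gg A B x t = c y * gg A B y t"
      and e2: "v * gg A B x t = c z * gg A B z t" for y z t
  proof -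
    have xy: "x \<noteq> y" using y insert.hyps(2) by auto
    have cy: "c y \<noteq> 0" using cpos y by force
    have gx: "gg A B x t \<noteq> 0" using gg_nz[OF insert.prems _ _ xy cy e1] y by auto
    have "v = ?r y t" using e1 gx by (simp add: field_simps)
    moreover have "c y * gg A B y t = c z * gg A B z t" using e1 e2 by simp
    ultimately have "v \<in> Bad2" unfolding Bad2_def using y by blast
    then show False using v by blast
  qed
  have "good (insert x X) A B c'"
    unfolding good_def
  proof (intro conjI ballI impI allI notI)
    fix y assume "y \<in> insert x X"
    then show "0 < c' y" "c' y < 1/100" using cpos c'X c'x v(1) by auto
  next
    fix y z t assume y: "y \<in> insert x X" and z: "z \<in> insert x X" and yz: "y \<noteq> z"
      and e1: "c' y * gg A B y t = c' z * gg A B z t" and e2: "c' y * gd A B y t = c' z * gd A B z t"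
    show False
    proof (cases "y = x")
      case True
      then have "z \<in> X" using z yz by auto
      then show False using tang[of z t] e1 e2 c'x c'X True by simp
    next
      case False
      then have yX: "y \<in> X" using y by auto
      show False
      proof (cases "z = x")
        case True
        then show False using tang[of y t] e1 e2 yX c'x c'X by (simp add: eq_commute)
      next
        case False
        then have "z \<in> X" using z by auto
        then show False using ctang[OF yX _ yz] e1 e2 c'X yX by simp
      qed
    qed
  next
    fix y z w t assume y: "y \<in> insert x X" and z: "z \<in> insert x X" and w: "w \<in> insert x X"
      and d: "y \<noteq> z" "y \<noteq> w" "z \<noteq> w"
      and e: "c' y * gg A B y t = c' z * gg A B z t \<and> c' y * gg A B y t = c' w * gg A B w t"
    show False
    proof (cases "y = x")
      case True
      then have "z \<in> X" "w \<in> X" using z w d by auto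
      then show False using trip[of z w t] e d c'x c'X True by simp
    next
      case yx: False
      show False
      proof (cases "z = x")
        case True
        then have yX: "y \<in> X" and wX: "w \<in> X" using y w d yx by auto
        have e1: "c y * gg A B y t = v * gg A B x t" using e True c'x c'X[OF yX] by simp
        have e2: "c y * gg A B y t = c w * gg A B w t" using e c'X[OF yX] c'X[OF wX] by simp
        show False using trip[of y w t] e1 e2 yX wX d(2) by simp
      next
        case zx: False
        show False
        proof (cases "w = x")
          case True
          then have "y \<in> X" "z \<in> X" using y z d yx zx by auto
          then show False using trip[of y z t] e d c'x c'X True by simp
        next
          case False
          then have yX: "y \<in> X" and zX: "z \<in> X" and wX: "w \<in> X" using y z w yx zx by auto
          have e1: "c y * gg A B y t = c z * gg A B z t" using e c'X[OF yX] c'X[OF zX] by simp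
          have e2: "c y * gg A B y t = c w * gg A B w t" using e c'X[OF yX] c'X[OF wX] by simp
          show False using ctrip[OF yX zX wX d e1 e2] .
        qed
      qed
    qed
  qed
  then show ?case by blast
qed




locale curves =
  fixes X :: "nat set" and A B c :: "nat \<Rightarrow> real"
  assumes finX: "finite X" and sepX: "sep X A B" and goodX: "good X A B c"
    and rngA: "\<forall>x\<in>X. 0 \<le> A x \<and> A x < 2 * pi" and rngB: "\<forall>x\<in>X. 0 \<le> B x \<and> B x < 2 * pi"
begin

definition ph :: "nat \<Rightarrow> real \<Rightarrow> real" where "ph x t = A x + t * (B x - A x)"
definition rr :: "nat \<Rightarrow> real \<Rightarrow> real" where "rr x u = 1 - c x * gg A B x u"
definition Gam :: "nat \<Rightarrow> real \<Rightarrow> complex" where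
  "Gam x t = complex_of_real (rr x (ph x t)) * cis (ph x t)"
definition Dv :: "nat \<Rightarrow> real \<Rightarrow> complex" where
  "Dv x t = complex_of_real (B x - A x) * (complex_of_real (- c x * gd A B x (ph x t))
      + \<i> * complex_of_real (rr x (ph x t))) * cis (ph x t)"

lemma cpos: "x \<in> X \<Longrightarrow> 0 < c x \<and> c x < 1/100"
  using goodX by (simp add: good_def)

lemma AneB: "x \<in> X \<Longrightarrow> A x \<noteq> B x"
  using sepX by (simp add: sep_def)

lemma gg_ph: "gg A B x (ph x t) = (B x - A x)^2 * (t * (1 - t))"
  by (simp add: gg_def ph_def power2_eq_square algebra_simps)

lemma rr_bounds:
  assumes x: "x \<in> X" and t: "0 \<le> t" "t \<le> 1"
  shows "0 < rr x (ph x t)" "rr x (ph x t) \<le> 1" "0 < t \<Longrightarrow> t < 1 \<Longrightarrow> rr x (ph x t) < 1"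
proof -
  have "0 \<le> A x" "A x < 2 * pi" "0 \<le> B x" "B x < 2 * pi" using rngA rngB x by auto
  then have d: "\<bar>B x - A x\<bar> < 2 * pi" by (simp add: abs_less_iff)
  have "\<bar>B x - A x\<bar>^2 < (2 * pi)^2" by (rule power_strict_mono[OF d]) auto
  then have s1: "(B x - A x)^2 < (2 * pi)^2" by simp
  have "2 * pi < 8" using pi_less_4 by simp
  then have "(2 * pi)^2 < 8^2" by (intro power_strict_mono) auto
  then have sq: "(B x - A x)^2 < 64" using s1 by simp
  have e: "t * (1 - t) = 1/4 - (t - 1/2)^2" by (simp add: power2_eq_square algebra_simps)
  have tt: "0 \<le> t * (1 - t)" "t * (1 - t) \<le> 1/4" using t unfolding e[symmetric] by simp
    (simp add: e)
  have c: "0 < c x" "c x < 1/100" using cpos x by auto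
  have g0: "0 \<le> (B x - A x)^2 * (t * (1 - t))" using tt by simp
  have g1: "(B x - A x)^2 * (t * (1 - t)) \<le> 64 * (1/4)"
    using tt sq by (intro mult_mono) auto
  have "c x * ((B x - A x)^2 * (t * (1 - t))) < 1"
  proof -
    have "c x * ((B x - A x)^2 * (t * (1 - t))) \<le> c x * 16" using g1 c by (intro mult_left_mono) auto
    then show ?thesis using c by linarith
  qed
  then show "0 < rr x (ph x t)" unfolding rr_def gg_ph by simp
  show "rr x (ph x t) \<le> 1" unfolding rr_def gg_ph using c g0 by simp
  assume "0 < t" "t < 1"
  then have "0 < t * (1 - t)" by simp
  moreover have "0 < (B x - A x)^2" using AneB[OF x] by simp
  ultimately show "rr x (ph x t) < 1" unfolding rr_def gg_ph using c by simp
qed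

lemma Gam0: "Gam x 0 = cis (A x)" by (simp add: Gam_def rr_def ph_def gg_def)
lemma Gam1: "Gam x 1 = cis (B x)" by (simp add: Gam_def rr_def ph_def gg_def)

lemma norm_Gam: "x \<in> X \<Longrightarrow> 0 \<le> t \<Longrightarrow> t \<le> 1 \<Longrightarrow> norm (Gam x t) = rr x (ph x t)"
  using rr_bounds[of x t] by (simp add: Gam_def norm_mult)

lemma vd_cis: "((\<lambda>t. cis (a + t * d)) has_vector_derivative (complex_of_real d * (\<i> * cis (a + t * d)))) (at t)"
proof -
  have "((\<lambda>t. a + t * d) has_derivative (\<lambda>h. h * d)) (at t)"
    by (auto intro!: derivative_eq_intros)
  from has_derivative_cis[OF this] show ?thesis
    unfolding has_vector_derivative_def by (simp add: scaleR_conv_of_real algebra_simps)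
qed

lemma Gam_deriv: "(Gam x has_vector_derivative Dv x t) (at t)"
proof -
  have r: "((\<lambda>t. rr x (ph x t)) has_real_derivative (- c x * gd A B x (ph x t) * (B x - A x))) (at t)"
    unfolding rr_def gg_def gd_def ph_def
    by (auto intro!: derivative_eq_intros simp: algebra_simps)
  have "((\<lambda>t. complex_of_real (rr x (ph x t)) * cis (A x + t * (B x - A x))) has_vector_derivative
      (complex_of_real (rr x (ph x t)) * (complex_of_real (B x - A x) * (\<i> * cis (A x + t * (B x - A x))))
       + complex_of_real (- c x * gd A B x (ph x t) * (B x - A x)) * cis (A x + t * (B x - A x)))) (at t)"
    by (intro has_vector_derivative_mult has_vector_derivative_of_real r vd_cis)
  moreover have "complex_of_real (rr x (ph x t)) * (complex_of_real (B x - A x) * (\<i> * cis (A x + t * (B x - A x))))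
       + complex_of_real (- c x * gd A B x (ph x t) * (B x - A x)) * cis (A x + t * (B x - A x)) = Dv x t"
    unfolding Dv_def ph_def[symmetric] of_real_mult
    by (simp only: ring_distribs mult_ac add_ac)
  ultimately show ?thesis unfolding Gam_def ph_def[symmetric] by simp
qed

lemma Dv_cont: "continuous_on S (Dv x)"
  unfolding Dv_def rr_def gg_def gd_def ph_def by (intro continuous_intros)

lemma dv_Gam: "0 \<le> t \<Longrightarrow> t \<le> 1 \<Longrightarrow> dv (Gam x) t = Dv x t"
  unfolding dv_def by (rule vector_derivative_at_within_ivl[OF Gam_deriv]) auto

lemma Dv_nz: assumes "x \<in> X" "0 \<le> t" "t \<le> 1" shows "Dv x t \<noteq> 0"
proof -
  have "Im (complex_of_real (- c x * gd A B x (ph x t)) + \<i> * complex_of_real (rr x (ph x t))) \<noteq> 0"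
    using rr_bounds(1)[OF assms] by simp
  then have "complex_of_real (- c x * gd A B x (ph x t)) + \<i> * complex_of_real (rr x (ph x t)) \<noteq> 0"
    by auto
  moreover have "complex_of_real (B x - A x) \<noteq> 0" using AneB[OF assms(1)] by simp
  ultimately show ?thesis unfolding Dv_def by simp
qed

lemma C1: "Gam x C1_differentiable_on {0..1}"
  unfolding C1_differentiable_on_def using Gam_deriv Dv_cont by blast

end



definition chi :: "real \<Rightarrow> real \<Rightarrow> real \<Rightarrow> bool" where
  "chi a b e \<longleftrightarrow> (if a < b then a < e \<and> e < b else a < e \<or> e < b)"

lemma comb_final:
  fixes a1 b1 a2 b2 :: real
  assumes d: "a1 \<noteq> b1" "a2 \<noteq> b2" "a1 \<noteq> a2" "a1 \<noteq> b2" "b1 \<noteq> a2" "b1 \<noteq> b2"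
  defines "lo \<equiv> max (min a1 b1) (min a2 b2)" and "hi \<equiv> min (max a1 b1) (max a2 b2)"
  defines "s \<equiv> \<lambda>e. (if e = a1 \<or> e = b1 then 1 else - 1 :: real)"
  shows "(if lo < hi then sgn ((b1 - a1) * (b2 - a2)) * (s hi - s lo) else 0)
     = 2 * (of_bool (chi a1 b1 a2) - of_bool (chi a1 b1 b2))"
proof -
  have "a1 < b1 \<or> b1 < a1" "a2 < b2 \<or> b2 < a2" using d by auto
  then show ?thesis
    unfolding lo_def hi_def s_def chi_def using d
    by (elim disjE) (auto simp: sgn_mult min_def max_def)
qed




context curves begin

lemma ph_rng:
  assumes x: "x \<in> X" and t: "0 \<le> t" "t \<le> 1"
  shows "min (A x) (B x) \<le> ph x t" "ph x t \<le> max (A x) (B x)" "0 \<le> ph x t" "ph x t < 2 * pi"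
proof -
  have r: "0 \<le> A x" "A x < 2 * pi" "0 \<le> B x" "B x < 2 * pi" using rngA rngB x by auto
  have "min (A x) (B x) \<le> ph x t \<and> ph x t \<le> max (A x) (B x)"
  proof (cases "A x \<le> B x")
    case True
    have "0 \<le> t * (B x - A x)" using True t by simp
    moreover have "t * (B x - A x) \<le> B x - A x" using True t by (simp add: mult_left_le_one_le)
    ultimately show ?thesis using True by (simp add: ph_def)
  next
    case False
    have "0 \<le> t * (A x - B x)" using False t by simp
    moreover have "t * (A x - B x) \<le> A x - B x" using False t by (simp add: mult_left_le_one_le)
    ultimately show ?thesis using False by (simp add: ph_def algebra_simps)
  qed
  then show "min (A x) (B x) \<le> ph x t" "ph x t \<le> max (A x) (B x)" by auto
  then show "0 \<le> ph x t" "ph x t < 2 * pi" using r by auto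
qed

lemma cis_inj:
  assumes "0 \<le> a" "a < 2 * pi" "0 \<le> b" "b < 2 * pi" "cis a = cis b"
  shows "a = b"
proof -
  have "exp (\<i> * complex_of_real a) = exp (\<i> * complex_of_real b)"
    using assms(5) by (simp add: cis_conv_exp)
  then obtain n :: int where n: "\<i> * complex_of_real a = \<i> * complex_of_real b + of_int (2 * n) * pi * \<i>"
    unfolding exp_eq by blast
  then have "Im (\<i> * complex_of_real a) = Im (\<i> * complex_of_real b + of_int (2 * n) * pi * \<i>)"
    by simp
  then have e: "a - b = real_of_int n * (2 * pi)" by simp
  have "n = 0"
  proof (rule ccontr)
    assume "n \<noteq> 0"
    then have "n \<ge> 1 \<or> n \<le> -1" by auto
    then show False
    proof
      assume "n \<ge> 1"
      then have "real_of_int n * (2 * pi) \<ge> 1 * (2 * pi)" by (intro mult_right_mono) auto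
      then show False using e assms by linarith
    next
      assume "n \<le> -1"
      then have "real_of_int n * (2 * pi) \<le> -1 * (2 * pi)" by (intro mult_right_mono) auto
      then show False using e assms by linarith
    qed
  qed
  then show ?thesis using e by simp
qed


lemma meet:
  assumes x: "x \<in> X" and y: "y \<in> X" and s: "0 \<le> s" "s \<le> 1" and t: "0 \<le> t" "t \<le> 1"
  shows "Gam x s = Gam y t \<longleftrightarrow> ph x s = ph y t \<and> rr x (ph x s) = rr y (ph y t)"
proof
  assume e: "Gam x s = Gam y t"
  have r: "rr x (ph x s) = rr y (ph y t)"
    using norm_Gam[OF x s] norm_Gam[OF y t] e by simp
  have "rr x (ph x s) \<noteq> 0" using rr_bounds(1)[OF x s] by simp
  then have "cis (ph x s) = cis (ph y t)"
    using e r unfolding Gam_def by simp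
  then have "ph x s = ph y t"
    using cis_inj ph_rng(3,4)[OF x s] ph_rng(3,4)[OF y t] by blast
  then show "ph x s = ph y t \<and> rr x (ph x s) = rr y (ph y t)" using r by simp
next
  assume h: "ph x s = ph y t \<and> rr x (ph x s) = rr y (ph y t)"
  show "Gam x s = Gam y t" unfolding Gam_def using h by metis
qed

lemma Gam_inj:
  assumes x: "x \<in> X" and s: "0 \<le> s" "s \<le> 1" and t: "0 \<le> t" "t \<le> 1"
    and e: "Gam x s = Gam x t"
  shows "s = t"
proof -
  have "ph x s = ph x t" using meet[OF x x s t] e by simp
  then have "s * (B x - A x) = t * (B x - A x)" by (simp add: ph_def)
  then show ?thesis using AneB[OF x] by simp
qed

lemma cross_Dv:
  assumes "ph x s = p" "ph y t = p" "rr x p = \<rho>" "rr y p = \<rho>"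
  shows "cross (Dv x s) (Dv y t) = (B x - A x) * (B y - A y) * \<rho> * (c y * gd A B y p - c x * gd A B x p)"
proof -
  have cc: "cnj (cis p) * cis p = 1" by (simp add: cis_cnj cis_mult)
  define a where "a = - c x * gd A B x p"
  define b where "b = - c y * gd A B y p"
  have "cnj (Dv x s) * Dv y t = complex_of_real ((B x - A x) * (B y - A y)) *
      (cnj (complex_of_real a + \<i> * complex_of_real \<rho>) * (complex_of_real b + \<i> * complex_of_real \<rho>)) * (cnj (cis p) * cis p)"
    unfolding Dv_def assms a_def b_def by (simp add: mult_ac)
  also have "\<dots> = complex_of_real ((B x - A x) * (B y - A y)) *
      (cnj (complex_of_real a + \<i> * complex_of_real \<rho>) * (complex_of_real b + \<i> * complex_of_real \<rho>))"
    using cc by simp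
  finally have F: "cnj (Dv x s) * Dv y t = complex_of_real ((B x - A x) * (B y - A y)) *
      (cnj (complex_of_real a + \<i> * complex_of_real \<rho>) * (complex_of_real b + \<i> * complex_of_real \<rho>))" .
  have I: "Im (cnj (complex_of_real a + \<i> * complex_of_real \<rho>) * (complex_of_real b + \<i> * complex_of_real \<rho>)) = \<rho> * a - \<rho> * b"
    by (simp add: algebra_simps)
  have "cross (Dv x s) (Dv y t) = (B x - A x) * (B y - A y) * (\<rho> * a - \<rho> * b)"
    unfolding cross_def F using I by simp
  then show ?thesis unfolding a_def b_def by (simp add: algebra_simps)
qed


lemma gg_pos:
  assumes "min (A x) (B x) < e" "e < max (A x) (B x)"
  shows "0 < gg A B x e"
proof (cases "A x < B x")
  case True then show ?thesis using assms by (simp add: gg_def)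
next
  case False then show ?thesis using assms by (simp add: gg_def mult_neg_neg)
qed

lemma sgn_end:
  assumes x: "x \<in> X" and y: "y \<in> X" and xy: "x \<noteq> y"
    and e: "e = A x \<or> e = B x \<or> e = A y \<or> e = B y"
    and ex: "min (A x) (B x) \<le> e" "e \<le> max (A x) (B x)"
    and ey: "min (A y) (B y) \<le> e" "e \<le> max (A y) (B y)"
  shows "sgn (c y * gg A B y e - c x * gg A B x e) = (if e = A x \<or> e = B x then 1 else -1)"
proof -
  have d: "A x \<noteq> A y" "A x \<noteq> B y" "B x \<noteq> A y" "B x \<noteq> B y" "A x \<noteq> B x" "A y \<noteq> B y"
    using sepX x y xy unfolding sep_def by auto
  have cx: "0 < c x" and cy: "0 < c y" using cpos x y by auto
  show ?thesis
  proof (cases "e = A x \<or> e = B x")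
    case True
    then have "e \<noteq> A y" "e \<noteq> B y" using d by auto
    then have "min (A y) (B y) < e" "e < max (A y) (B y)" using ey by (auto simp: min_def max_def)
    then have "0 < gg A B y e" by (rule gg_pos)
    moreover have "gg A B x e = 0" using True by (auto simp: gg_def)
    ultimately show ?thesis using True cy by simp
  next
    case False
    then have "e \<noteq> A x" "e \<noteq> B x" by auto
    then have "min (A x) (B x) < e" "e < max (A x) (B x)" using ex by (auto simp: min_def max_def)
    then have "0 < gg A B x e" by (rule gg_pos)
    then have p: "0 < c x * gg A B x e" using cx by simp
    have "gg A B y e = 0" using False e by (auto simp: gg_def)
    then have q: "c y * gg A B y e - c x * gg A B x e < 0" using p by simp
    then show ?thesis using False by (simp add: sgn_if)
  qed
qed

lemma inum_formula:
  assumes x: "x \<in> X" and y: "y \<in> X" and xy: "x \<noteq> y"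
  shows "inum (Gam x) (Gam y) = of_bool (chi (A x) (B x) (A y)) - of_bool (chi (A x) (B x) (B y))"
proof -
  define Dx where "Dx = B x - A x"
  define Dy where "Dy = B y - A y"
  define Df where "Df = (\<lambda>p. c y * gg A B y p - c x * gg A B x p)"
  define Df' where "Df' = (\<lambda>p. c y * gd A B y p - c x * gd A B x p)"
  define lo where "lo = max (min (A x) (B x)) (min (A y) (B y))"
  define hi where "hi = min (max (A x) (B x)) (max (A y) (B y))"
  define Z where "Z = {(s, t). s \<in> {0..1::real} \<and> t \<in> {0..1::real} \<and> Gam x s = Gam y t}"
  define ZP where "ZP = {p \<in> {lo..hi}. Df p = 0}"
  define h where "h = (\<lambda>p. if Dx * Dy * Df' p > 0 then 1 else (-1::int))"
  have d: "A x \<noteq> A y" "A x \<noteq> B y" "B x \<noteq> A y" "B x \<noteq> B y" "A x \<noteq> B x" "A y \<noteq> B y"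
    using sepX x y xy unfolding sep_def by auto
  have cx: "0 < c x" and cy: "0 < c y" using cpos x y by auto
  have Dxy: "Dx * Dy \<noteq> 0" using d unfolding Dx_def Dy_def by simp
  have tang: "\<And>p. Df p = 0 \<Longrightarrow> Df' p \<noteq> 0"
    using goodX x y xy unfolding good_def Df_def Df'_def by force
  have finZP: "finite ZP"
  proof (rule finite_subset)
    show "ZP \<subseteq> {t. c x * gg A B x t = c y * gg A B y t}" unfolding ZP_def Df_def by auto
    show "finite {t. c x * gg A B x t = c y * gg A B y t}"
      by (rule finite_meet[OF sepX x y xy]) (use cx cy in auto)
  qed
  have S1: "inum (Gam x) (Gam y) = sum h ZP"
    unfolding inum_def Z_def[symmetric]
  proof (rule sum.reindex_bij_witness[where j = "\<lambda>(s, t). ph x s" and i = "\<lambda>p. ((p - A x) / Dx, (p - A y) / Dy)"])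
    fix a assume a: "a \<in> Z"
    then obtain s t where st: "a = (s, t)" "0 \<le> s" "s \<le> 1" "0 \<le> t" "t \<le> 1" "Gam x s = Gam y t"
      unfolding Z_def by auto
    have m: "ph x s = ph y t" "rr x (ph x s) = rr y (ph y t)" using meet[OF x y st(2-5)] st(6) by auto
    have e1: "(ph x s - A x) / Dx = s" unfolding ph_def Dx_def using d by simp
    have "ph x s - A y = t * Dy" using m(1) unfolding ph_def Dy_def by simp
    then have e2: "(ph x s - A y) / Dy = t" using d by (simp add: Dy_def)
    show "(\<lambda>p. ((p - A x) / Dx, (p - A y) / Dy)) ((\<lambda>(s, t). ph x s) a) = a"
      using st(1) e1 e2 by simp
    have "lo \<le> ph x s" "ph x s \<le> hi" unfolding lo_def hi_def
      using ph_rng(1,2)[OF x st(2,3)] ph_rng(1,2)[OF y st(4,5)] m by auto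
    moreover have "Df (ph x s) = 0" using m unfolding Df_def rr_def by simp
    ultimately show "(\<lambda>(s, t). ph x s) a \<in> ZP" unfolding ZP_def using st by simp
    have rpos: "0 < rr x (ph x s)" using rr_bounds(1)[OF x st(2,3)] .
    have "cross (dv (Gam x) s) (dv (Gam y) t) = Dx * Dy * rr x (ph x s) * Df' (ph x s)"
      unfolding dv_Gam[OF st(2,3)] dv_Gam[OF st(4,5)] Dx_def Dy_def Df'_def
      by (rule cross_Dv) (use m in auto)
    then have ce: "cross (dv (Gam x) s) (dv (Gam y) t) = (Dx * Dy * Df' (ph x s)) * rr x (ph x s)"
      by (simp add: mult_ac)
    have "(0 < (Dx * Dy * Df' (ph x s)) * rr x (ph x s)) = (0 < Dx * Dy * Df' (ph x s))"
      using mult_less_cancel_right_pos[OF rpos, of 0 "Dx * Dy * Df' (ph x s)"] by simp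
    then have "(0 < cross (dv (Gam x) s) (dv (Gam y) t)) = (0 < Dx * Dy * Df' (ph x s))"
      unfolding ce .
    then show "h ((\<lambda>(s, t). ph x s) a) =
      (case a of (s, t) \<Rightarrow> if 0 < cross (dv (Gam x) s) (dv (Gam y) t) then 1 else - 1)"
      unfolding h_def using st by simp
  next
    fix p assume p: "p \<in> ZP"
    then have plo: "lo \<le> p" "p \<le> hi" and pD: "Df p = 0" unfolding ZP_def by auto
    define s where "s = (p - A x) / Dx"
    define t where "t = (p - A y) / Dy"
    have phs: "ph x s = p" unfolding s_def ph_def Dx_def using d by simp
    have pht: "ph y t = p" unfolding t_def ph_def Dy_def using d by simp
    have s01: "0 \<le> s" "s \<le> 1" unfolding s_def Dx_def using plo d unfolding lo_def hi_def
      by (auto simp: divide_simps min_def max_def split: if_splits)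
    have t01: "0 \<le> t" "t \<le> 1" unfolding t_def Dy_def using plo d unfolding lo_def hi_def
      by (auto simp: divide_simps min_def max_def split: if_splits)
    have "rr x p = rr y p" using pD unfolding Df_def rr_def by simp
    then have "Gam x s = Gam y t" using meet[OF x y s01 t01] phs pht by simp
    then show "(\<lambda>p. ((p - A x) / Dx, (p - A y) / Dy)) p \<in> Z"
      unfolding Z_def using s01 t01 s_def t_def by simp
    show "(\<lambda>(s, t). ph x s) ((\<lambda>p. ((p - A x) / Dx, (p - A y) / Dy)) p) = p"
      using phs s_def by simp
  qed
  have S2: "real_of_int (sum h ZP) = sgn (Dx * Dy) * (\<Sum>p\<in>ZP. sgn (Df' p))"
  proof -
    have "real_of_int (sum h ZP) = (\<Sum>p\<in>ZP. sgn (Dx * Dy) * sgn (Df' p))"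
      unfolding of_int_sum
    proof (rule sum.cong[OF refl])
      fix p assume "p \<in> ZP"
      then have "Df' p \<noteq> 0" using tang unfolding ZP_def by auto
      then have "Dx * Dy * Df' p \<noteq> 0" using Dxy by simp
      then show "real_of_int (h p) = sgn (Dx * Dy) * sgn (Df' p)"
        unfolding h_def sgn_mult[symmetric] by (auto simp: sgn_if)
    qed
    then show ?thesis by (simp add: sum_distrib_left)
  qed
  have lohi: "lo \<noteq> hi"
    unfolding lo_def hi_def using d by (auto simp: min_def max_def split: if_splits)
  define s where "s = (\<lambda>e. (if e = A x \<or> e = B x then 1 else - 1 :: real))"
  have S3: "2 * (\<Sum>p\<in>ZP. sgn (Df' p)) = (if lo < hi then s hi - s lo else 0)"
  proof (cases "lo < hi")
    case True
    have lo_e: "lo = A x \<or> lo = B x \<or> lo = A y \<or> lo = B y" unfolding lo_def by (auto simp: min_def max_def)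
    have hi_e: "hi = A x \<or> hi = B x \<or> hi = A y \<or> hi = B y" unfolding hi_def by (auto simp: min_def max_def)
    have slo: "sgn (Df lo) = s lo" unfolding Df_def s_def
      by (rule sgn_end[OF x y xy lo_e]) (use True in \<open>auto simp: lo_def hi_def\<close>)
    have shi: "sgn (Df hi) = s hi" unfolding Df_def s_def
      by (rule sgn_end[OF x y xy hi_e]) (use True in \<open>auto simp: lo_def hi_def\<close>)
    have der: "\<And>p. (Df has_real_derivative Df' p) (at p)"
      unfolding Df_def Df'_def gg_def gd_def by (auto intro!: derivative_eq_intros simp: algebra_simps)
    have "2 * (\<Sum>p\<in>ZP. sgn (Df' p)) = sgn (Df hi) - sgn (Df lo)"
      unfolding ZP_def
    proof (rule zero_count[OF der refl True])
      show "Df lo \<noteq> 0" using slo unfolding s_def by (auto split: if_splits)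
      show "Df hi \<noteq> 0" using shi unfolding s_def by (auto split: if_splits)
      show "finite {z \<in> {lo..hi}. Df z = 0}" using finZP unfolding ZP_def .
      show "\<forall>z\<in>{lo..hi}. Df z = 0 \<longrightarrow> Df' z \<noteq> 0" using tang by auto
    qed
    then show ?thesis using True slo shi by simp
  next
    case False
    then have "ZP = {}" unfolding ZP_def using lohi by auto
    then show ?thesis using False by simp
  qed
  have S4: "(if lo < hi then sgn ((B x - A x) * (B y - A y)) * (s hi - s lo) else 0)
     = 2 * (of_bool (chi (A x) (B x) (A y)) - of_bool (chi (A x) (B x) (B y)))"
    unfolding lo_def hi_def s_def by (rule comb_final) (use d in auto)
  have "2 * real_of_int (inum (Gam x) (Gam y)) = 2 * (of_bool (chi (A x) (B x) (A y)) - of_bool (chi (A x) (B x) (B y)))"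
  proof -
    have "2 * real_of_int (inum (Gam x) (Gam y)) = sgn (Dx * Dy) * (2 * (\<Sum>p\<in>ZP. sgn (Df' p)))"
      unfolding S1 S2 by simp
    also have "\<dots> = (if lo < hi then sgn (Dx * Dy) * (s hi - s lo) else 0)" unfolding S3 by simp
    also have "\<dots> = 2 * (of_bool (chi (A x) (B x) (A y)) - of_bool (chi (A x) (B x) (B y)))"
      using S4 unfolding Dx_def Dy_def .
    finally show ?thesis .
  qed
  then have "real_of_int (inum (Gam x) (Gam y)) = real_of_int (of_bool (chi (A x) (B x) (A y)) - of_bool (chi (A x) (B x) (B y)))"
    by simp
  then show ?thesis by (simp only: of_int_eq_iff)
qed

end



lemma three_elems:
  assumes "finite S" "2 < card S"
  shows "\<exists>a b c. a \<in> S \<and> b \<in> S \<and> c \<in> S \<and> a \<noteq> b \<and> a \<noteq> c \<and> b \<noteq> c"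
proof -
  obtain a where a: "a \<in> S" using assms by (metis card.empty ex_in_conv not_less_zero)
  have c1: "1 < card (S - {a})" using assms a by simp
  obtain b where b: "b \<in> S - {a}" using c1 by (metis card.empty ex_in_conv not_less_zero)
  have c2: "0 < card (S - {a} - {b})" using c1 b assms by simp
  obtain c where c: "c \<in> S - {a} - {b}" using c2 by (metis card.empty ex_in_conv less_irrefl)
  show ?thesis using a b c by blast
qed

lemma two_elems:
  assumes "2 \<le> card S"
  shows "\<exists>a b. a \<in> S \<and> b \<in> S \<and> a \<noteq> b"
proof -
  have f: "finite S" using assms by (metis card.infinite not_numeral_le_zero)
  obtain a where a: "a \<in> S" using assms by (metis card.empty ex_in_conv not_numeral_le_zero)
  have "0 < card (S - {a})" using assms a f by simp
  then obtain b where b: "b \<in> S - {a}" by (metis card.empty ex_in_conv less_irrefl)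
  show ?thesis using a b by blast
qed

context curves begin

lemma finite_Z:
  assumes x: "x \<in> X" and y: "y \<in> X" and xy: "x \<noteq> y"
  shows "finite {(s, t). s \<in> {0..1::real} \<and> t \<in> {0..1::real} \<and> Gam x s = Gam y t}"
proof (rule finite_subset)
  have cx: "c x \<noteq> 0" and cy: "c y \<noteq> 0" using cpos x y by force+
  show "finite ((\<lambda>p. ((p - A x) / (B x - A x), (p - A y) / (B y - A y))) ` {t. c x * gg A B x t = c y * gg A B y t})"
    using finite_meet[OF sepX x y xy cx cy] by simp
  show "{(s, t). s \<in> {0..1::real} \<and> t \<in> {0..1::real} \<and> Gam x s = Gam y t} \<subseteq>
      (\<lambda>p. ((p - A x) / (B x - A x), (p - A y) / (B y - A y))) ` {t. c x * gg A B x t = c y * gg A B y t}"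
  proof
    fix a assume "a \<in> {(s, t). s \<in> {0..1::real} \<and> t \<in> {0..1::real} \<and> Gam x s = Gam y t}"
    then obtain s t where st: "a = (s, t)" "0 \<le> s" "s \<le> 1" "0 \<le> t" "t \<le> 1" "Gam x s = Gam y t" by auto
    have m: "ph x s = ph y t" "rr x (ph x s) = rr y (ph y t)" using meet[OF x y st(2-5)] st(6) by auto
    have e1: "(ph x s - A x) / (B x - A x) = s" unfolding ph_def using AneB[OF x] by simp
    have "ph x s - A y = t * (B y - A y)" using m(1) unfolding ph_def by simp
    then have e2: "(ph x s - A y) / (B y - A y) = t" using AneB[OF y] by simp
    have "c x * gg A B x (ph x s) = c y * gg A B y (ph x s)" using m unfolding rr_def by simp
    then show "a \<in> (\<lambda>p. ((p - A x) / (B x - A x), (p - A y) / (B y - A y))) ` {t. c x * gg A B x t = c y * gg A B y t}"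
      using st(1) e1 e2 by (intro image_eqI[of _ _ "ph x s"]) auto
  qed
qed

lemma gen_pos: "general_position X Gam"
proof -
  define Pre where "Pre = (\<lambda>p. {(i, t). i \<in> X \<and> t \<in> {0..1::real} \<and> Gam i t = p})"
  have injP: "inj_on fst (Pre p)" for p
    unfolding Pre_def inj_on_def using Gam_inj by auto
  have finP: "finite (Pre p)" for p
  proof (rule finite_imageD[OF _ injP])
    show "finite (fst ` Pre p)" by (rule finite_subset[OF _ finX]) (auto simp: Pre_def)
  qed
  have cardP: "card (Pre p) \<le> 2" for p
  proof (rule ccontr)
    assume "\<not> card (Pre p) \<le> 2"
    then have "2 < card (fst ` Pre p)" using card_image[OF injP] by simp
    then obtain i j k where ijk: "i \<in> fst ` Pre p" "j \<in> fst ` Pre p" "k \<in> fst ` Pre p" "i \<noteq> j" "i \<noteq> k" "j \<noteq> k"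
      using three_elems[of "fst ` Pre p"] finP by blast
    then obtain si sj sk where s: "(i, si) \<in> Pre p" "(j, sj) \<in> Pre p" "(k, sk) \<in> Pre p" by force
    then have X: "i \<in> X" "j \<in> X" "k \<in> X" and r: "0 \<le> si" "si \<le> 1" "0 \<le> sj" "sj \<le> 1" "0 \<le> sk" "sk \<le> 1"
      and g: "Gam i si = p" "Gam j sj = p" "Gam k sk = p" unfolding Pre_def by auto
    have m1: "ph i si = ph j sj" "rr i (ph i si) = rr j (ph j sj)" using meet[OF X(1,2) r(1-4)] g by auto
    have m2: "ph i si = ph k sk" "rr i (ph i si) = rr k (ph k sk)" using meet[OF X(1,3) r(1,2,5,6)] g by auto
    have "c i * gg A B i (ph i si) = c j * gg A B j (ph i si)"
      "c i * gg A B i (ph i si) = c k * gg A B k (ph i si)"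
      using m1 m2 unfolding rr_def by simp_all
    then show False using goodX X ijk unfolding good_def by blast
  qed
  have fin2: "finite {p. 2 \<le> card (Pre p) \<or> infinite (Pre p)}"
  proof (rule finite_subset)
    show "finite (\<Union>i\<in>X. \<Union>j\<in>X - {i}. (\<lambda>(s, t). Gam i s) ` {(s, t). s \<in> {0..1::real} \<and> t \<in> {0..1::real} \<and> Gam i s = Gam j t})"
      using finite_Z finX by auto
    show "{p. 2 \<le> card (Pre p) \<or> infinite (Pre p)} \<subseteq>
      (\<Union>i\<in>X. \<Union>j\<in>X - {i}. (\<lambda>(s, t). Gam i s) ` {(s, t). s \<in> {0..1::real} \<and> t \<in> {0..1::real} \<and> Gam i s = Gam j t})"
    proof
      fix p assume "p \<in> {p. 2 \<le> card (Pre p) \<or> infinite (Pre p)}"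
      then have "2 \<le> card (Pre p)" using finP by auto
      then obtain a b where ab: "a \<in> Pre p" "b \<in> Pre p" "a \<noteq> b" using two_elems by blast
      obtain i s where a: "a = (i, s)" by force
      obtain j t where b: "b = (j, t)" by force
      have X: "i \<in> X" "j \<in> X" and r: "0 \<le> s" "s \<le> 1" "0 \<le> t" "t \<le> 1"
        and g: "Gam i s = p" "Gam j t = p" using ab a b unfolding Pre_def by auto
      have "i \<noteq> j" using Gam_inj[OF X(1) r] g ab a b by auto
      then show "p \<in> (\<Union>i\<in>X. \<Union>j\<in>X - {i}. (\<lambda>(s, t). Gam i s) ` {(s, t). s \<in> {0..1::real} \<and> t \<in> {0..1::real} \<and> Gam i s = Gam j t})"
        using X r g by (intro UN_I[of i] UN_I[of j]) (auto intro!: image_eqI[of _ _ "(s, t)"])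
    qed
  qed
  have trans: "cross (dv (Gam i) s) (dv (Gam j) t) \<noteq> 0"
    if "i \<in> X" "j \<in> X" "s \<in> {0..1}" "t \<in> {0..1}" "(i, s) \<noteq> (j, t)" "Gam i s = Gam j t" for i j s t
  proof -
    have r: "0 \<le> s" "s \<le> 1" "0 \<le> t" "t \<le> 1" using that by auto
    have ij: "i \<noteq> j" using Gam_inj[OF that(1) r] that by auto
    have m: "ph i s = ph j t" "rr i (ph i s) = rr j (ph j t)" using meet[OF that(1,2) r] that(6) by auto
    have "c i * gg A B i (ph i s) = c j * gg A B j (ph i s)" using m unfolding rr_def by simp
    then have tg: "c i * gd A B i (ph i s) \<noteq> c j * gd A B j (ph i s)"
      using goodX that(1,2) ij unfolding good_def by blast
    have "cross (dv (Gam i) s) (dv (Gam j) t) = (B i - A i) * (B j - A j) * rr i (ph i s) *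
        (c j * gd A B j (ph i s) - c i * gd A B i (ph i s))"
      unfolding dv_Gam[OF r(1,2)] dv_Gam[OF r(3,4)] by (rule cross_Dv) (use m in auto)
    moreover have "B i - A i \<noteq> 0" "B j - A j \<noteq> 0" using AneB[OF that(1)] AneB[OF that(2)] by auto
    moreover have "rr i (ph i s) \<noteq> 0" using rr_bounds(1)[OF that(1) r(1,2)] by simp
    ultimately show ?thesis using tg by simp
  qed
  show ?thesis unfolding general_position_def
    using fin2 finP cardP trans unfolding Pre_def by blast
qed

end



definition pos :: "ocd \<Rightarrow> endpoint \<Rightarrow> nat" where
  "pos w e = (THE k. k < length w \<and> w ! k = e)"

definition SS :: "ocd \<Rightarrow> nat \<Rightarrow> int" where
  "SS w k = (\<Sum>j<k. sg (w ! j))"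

definition chiN :: "nat \<Rightarrow> nat \<Rightarrow> nat \<Rightarrow> bool" where
  "chiN a b k \<longleftrightarrow> (if a < b then a < k \<and> k < b else a < k \<or> k < b)"

lemma pos_prop:
  assumes "distinct w" "e \<in> set w"
  shows "pos w e < length w" "w ! pos w e = e"
proof -
  have "\<exists>!k. k < length w \<and> w ! k = e" using distinct_Ex1[OF assms] .
  then have "pos w e < length w \<and> w ! pos w e = e" unfolding pos_def by (rule theI')
  then show "pos w e < length w" "w ! pos w e = e" by auto
qed

lemma pos_nth:
  assumes "distinct w" "k < length w"
  shows "pos w (w ! k) = k"
  using pos_prop[OF assms(1) nth_mem[OF assms(2)]] assms nth_eq_iff_index_eq by blast

lemma pos_inj:
  assumes "distinct w" "e \<in> set w" "e' \<in> set w" "pos w e = pos w e'"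
  shows "e = e'"
  using pos_prop[OF assms(1,2)] pos_prop[OF assms(1,3)] assms(4) by metis

lemma pre_pos:
  assumes "distinct w" "e \<in> set w"
  shows "pre w e = SS w (pos w e)"
proof -
  have p: "pos w e < length w" "w ! pos w e = e" using pos_prop[OF assms] by auto
  have "takeWhile (\<lambda>a. a \<noteq> e) w = take (pos w e) w"
  proof (rule takeWhile_eq_take_P_nth)
    fix i assume "i < pos w e" "i < length w"
    then show "w ! i \<noteq> e" using p assms(1) nth_eq_iff_index_eq by fastforce
  next
    show "pos w e < length w \<Longrightarrow> \<not> w ! pos w e \<noteq> e" using p by simp
  qed
  then have "pre w e = ssum (take (pos w e) w)" by (simp add: pre_def)
  also have "\<dots> = (\<Sum>j<pos w e. sg (w ! j))"
    unfolding ssum_def sum_list_sum_nth using p(1) by (simp add: lessThan_atLeast0)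
  finally show ?thesis by (simp add: SS_def)
qed

lemma SS_length: "wf_ocd w \<Longrightarrow> SS w (length w) = 0"
proof -
  assume "wf_ocd w"
  then have "ssum w = 0" by (rule wf_ssum)
  then show ?thesis unfolding ssum_def sum_list_sum_nth SS_def by (simp add: lessThan_atLeast0)
qed

lemma arc_sum:
  assumes wf: "wf_ocd w" and ab: "a < length w" "b < length w" "a \<noteq> b"
  shows "(\<Sum>k<length w. if chiN a b k then sg (w ! k) else 0) = SS w b - SS w a - sg (w ! a)"
proof -
  let ?n = "length w" and ?f = "\<lambda>k. sg (w ! k)"
  have split: "\<And>m p. m \<le> p \<Longrightarrow> (\<Sum>k<p. ?f k) = (\<Sum>k<m. ?f k) + (\<Sum>k\<in>{m..<p}. ?f k)"
    by (metis atLeast0LessThan le0 sum.atLeastLessThan_concat)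
  have Sa: "SS w (Suc a) = SS w a + sg (w ! a)" by (simp add: SS_def)
  have e: "(\<Sum>k<?n. if chiN a b k then ?f k else 0) = (\<Sum>k\<in>{k \<in> {..<?n}. chiN a b k}. ?f k)"
    by (subst sum.inter_filter) auto
  show ?thesis
  proof (cases "a < b")
    case True
    have "{k \<in> {..<?n}. chiN a b k} = {Suc a..<b}" using True ab by (auto simp: chiN_def)
    moreover have "(\<Sum>k\<in>{Suc a..<b}. ?f k) = SS w b - SS w (Suc a)"
      using split[of "Suc a" b] True unfolding SS_def by simp
    ultimately show ?thesis using e Sa by simp
  next
    case False
    then have ba: "b < a" using ab by simp
    have "{k \<in> {..<?n}. chiN a b k} = {Suc a..<?n} \<union> {..<b}" using ba ab by (auto simp: chiN_def)
    moreover have "(\<Sum>k\<in>{Suc a..<?n} \<union> {..<b}. ?f k) = (\<Sum>k\<in>{Suc a..<?n}. ?f k) + (\<Sum>k<b. ?f k)"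
      by (rule sum.union_disjoint) (use ba in auto)
    moreover have "(\<Sum>k\<in>{Suc a..<?n}. ?f k) = SS w ?n - SS w (Suc a)"
      using split[of "Suc a" ?n] ab unfolding SS_def by simp
    ultimately show ?thesis using e Sa SS_length[OF wf] by (simp add: SS_def)
  qed
qed

lemma pairing_exists:
  fixes f :: "nat \<Rightarrow> int"
  assumes fin: "finite X" and cnt: "\<And>k. card {x \<in> X. f x = k} = card {x \<in> X. f x = - k}"
  shows "\<exists>p. \<forall>x\<in>X. p x \<in> X \<and> p (p x) = x \<and> f (p x) = - f x"
proof -
  define S where "S = (\<lambda>k. {x \<in> X. f x = k})"
  have "\<forall>k. \<exists>g. bij_betw g (S k) (S (- k))"
  proof
    fix k
    have "finite (S k)" "finite (S (-k))" using fin unfolding S_def by auto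
    moreover have "card (S k) = card (S (-k))" using cnt unfolding S_def by simp
    ultimately show "\<exists>g. bij_betw g (S k) (S (- k))" by (rule finite_same_card_bij)
  qed
  then obtain G where G: "\<And>k. bij_betw (G k) (S k) (S (- k))" by metis
  define p where "p = (\<lambda>x. if f x > 0 then G (f x) x else if f x < 0 then inv_into (S (- f x)) (G (- f x)) x else x)"
  have pe: "\<And>y. p y = (if f y > 0 then G (f y) y else if f y < 0 then inv_into (S (- f y)) (G (- f y)) y else y)"
    unfolding p_def by simp
  have "\<forall>x\<in>X. p x \<in> X \<and> p (p x) = x \<and> f (p x) = - f x"
  proof
    fix x assume x: "x \<in> X"
    show "p x \<in> X \<and> p (p x) = x \<and> f (p x) = - f x"
    proof (cases "f x > 0")
      case True
      let ?k = "f x"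
      have xs: "x \<in> S ?k" using x unfolding S_def by simp
      have px: "p x = G ?k x" unfolding p_def using True by simp
      have m: "G ?k x \<in> S (- ?k)" using G[of ?k] xs by (auto simp: bij_betw_def)
      then have fpx: "f (p x) = - ?k" and pX: "p x \<in> X" unfolding px S_def by auto
      have "p (p x) = inv_into (S (- f (p x))) (G (- f (p x))) (p x)" using pe[of "p x"] fpx True by simp
      also have "\<dots> = inv_into (S ?k) (G ?k) (p x)" by (simp only: fpx minus_minus)
      also have "\<dots> = inv_into (S ?k) (G ?k) (G ?k x)" by (simp only: px)
      also have "\<dots> = x" using G[of ?k] xs by (simp add: bij_betw_def inv_into_f_f)
      finally show ?thesis using fpx pX by simp
    next
      case False
      show ?thesis
      proof (cases "f x < 0")
        case True
        let ?k = "- f x"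
        have kp: "?k > 0" using True by simp
        have xs: "x \<in> S (- ?k)" using x unfolding S_def by simp
        have px: "p x = inv_into (S ?k) (G ?k) x" unfolding p_def using True by simp
        have im: "G ?k ` S ?k = S (- ?k)" using G[of ?k] by (simp add: bij_betw_def)
        have m: "p x \<in> S ?k" unfolding px using xs im by (metis inv_into_into)
        then have fpx: "f (p x) = ?k" and pX: "p x \<in> X" unfolding S_def by auto
        have "p (p x) = G (f (p x)) (p x)" using pe[of "p x"] fpx kp by simp
        also have "\<dots> = G ?k (p x)" unfolding fpx ..
        also have "\<dots> = x" unfolding px using xs im by (simp add: f_inv_into_f)
        finally show ?thesis using fpx pX by simp
      next
        case False2: False
        then have "f x = 0" using False by simp
        then show ?thesis unfolding p_def using x by simp
      qed
    qed
  qed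
  then show ?thesis by blast
qed


lemma chi_anti:
  fixes a1 b1 a2 b2 :: real
  assumes d: "a1 \<noteq> b1" "a2 \<noteq> b2" "a1 \<noteq> a2" "a1 \<noteq> b2" "b1 \<noteq> a2" "b1 \<noteq> b2"
  shows "(of_bool (chi a1 b1 a2) - of_bool (chi a1 b1 b2)) + (of_bool (chi a2 b2 a1) - of_bool (chi a2 b2 b1)) = (0::int)"
proof -
  have "a1 < b1 \<or> b1 < a1" "a2 < b2 \<or> b2 < a2" using d by auto
  then show ?thesis unfolding chi_def using d by (elim disjE) auto
qed

lemma chi_self: "of_bool (chi a b a) - of_bool (chi a b b) = (0::int)"
  by (auto simp: chi_def)

lemma ang_less:
  assumes "0 < n"
  shows "(2 * pi * real k / real n < 2 * pi * real k' / real n) \<longleftrightarrow> k < k'"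
proof -
  have "(2 * pi * real k / real n < 2 * pi * real k' / real n) \<longleftrightarrow> (2 * pi * real k < 2 * pi * real k')"
    using assms by (simp add: divide_less_cancel)
  also have "\<dots> \<longleftrightarrow> k < k'" by simp
  finally show ?thesis .
qed

lemma chi_ang:
  assumes "0 < n"
  shows "chi (2 * pi * real a / real n) (2 * pi * real b / real n) (2 * pi * real k / real n) = chiN a b k"
  unfolding chi_def chiN_def ang_less[OF assms] ..

lemma ang_eq:
  assumes "0 < n"
  shows "(2 * pi * real k / real n = 2 * pi * real k' / real n) \<longleftrightarrow> k = k'"
  using ang_less[OF assms, of k k'] ang_less[OF assms, of k' k] by (metis less_irrefl linorder_neqE_nat)

lemma ang_rng:
  assumes "k < n"
  shows "0 \<le> 2 * pi * real k / real n" "2 * pi * real k / real n < 2 * pi"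
proof -
  show "0 \<le> 2 * pi * real k / real n" by simp
  have "real k / real n < 1" using assms by simp
  then have "2 * pi * (real k / real n) < 2 * pi * 1" by (intro mult_strict_left_mono) auto
  then show "2 * pi * real k / real n < 2 * pi" by simp
qed




lemma main_fil:
  assumes wf: "wf_ocd w" and C: "Cnd w"
  shows "admits_filamentation w"
proof -
  define n where "n = length w"
  define X where "X = chords w"
  have dist: "distinct w" using wf by (simp add: wf_ocd_def)
  have finX: "finite X" unfolding X_def by simp
  obtain p where p: "\<forall>x\<in>X. p x \<in> X \<and> p (p x) = x \<and> idx w (p x) = - idx w x"
    using pairing_exists[OF finX, of "idx w"] C unfolding Cnd_def X_def by blast
  have pX: "\<And>x. x \<in> X \<Longrightarrow> p x \<in> X" and pp: "\<And>x. x \<in> X \<Longrightarrow> p (p x) = x"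
    and pidx: "\<And>x. x \<in> X \<Longrightarrow> idx w (p x) = - idx w x" using p by auto
  have pinj: "\<And>x y. x \<in> X \<Longrightarrow> y \<in> X \<Longrightarrow> p x = p y \<Longrightarrow> x = y" using pp by metis
  have memT: "\<And>x. x \<in> X \<Longrightarrow> (x, True) \<in> set w" and memF: "\<And>x. x \<in> X \<Longrightarrow> (x, False) \<in> set w"
    using wf_both[OF wf] unfolding X_def by auto
  define a where "a = (\<lambda>x. pos w (p x, False))"
  define b where "b = (\<lambda>x. pos w (x, True))"
  define A where "A = (\<lambda>x. 2 * pi * real (a x) / real n)"
  define B where "B = (\<lambda>x. 2 * pi * real (b x) / real n)"
  have a_lt: "\<And>x. x \<in> X \<Longrightarrow> a x < n" and a_nth: "\<And>x. x \<in> X \<Longrightarrow> w ! a x = (p x, False)"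
    using pos_prop[OF dist memF[OF pX]] unfolding a_def n_def by auto
  have b_lt: "\<And>x. x \<in> X \<Longrightarrow> b x < n" and b_nth: "\<And>x. x \<in> X \<Longrightarrow> w ! b x = (x, True)"
    using pos_prop[OF dist memT] unfolding b_def n_def by auto
  have npos: "\<And>x. x \<in> X \<Longrightarrow> 0 < n" using a_lt by fastforce
  have ab_ne: "\<And>x y. x \<in> X \<Longrightarrow> y \<in> X \<Longrightarrow> a x \<noteq> b y"
  proof
    fix x y assume "x \<in> X" "y \<in> X" "a x = b y"
    then have "(p x, False) = (y, True)" using a_nth b_nth by metis
    then show False by simp
  qed
  have aa_ne: "\<And>x y. x \<in> X \<Longrightarrow> y \<in> X \<Longrightarrow> x \<noteq> y \<Longrightarrow> a x \<noteq> a y"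
  proof
    fix x y assume xy: "x \<in> X" "y \<in> X" "x \<noteq> y" "a x = a y"
    then have "(p x, False) = (p y, False)" using a_nth by metis
    then show False using pinj xy by blast
  qed
  have bb_ne: "\<And>x y. x \<in> X \<Longrightarrow> y \<in> X \<Longrightarrow> x \<noteq> y \<Longrightarrow> b x \<noteq> b y"
  proof
    fix x y assume xy: "x \<in> X" "y \<in> X" "x \<noteq> y" "b x = b y"
    then have "(x, True) = (y, True)" using b_nth by metis
    then show False using xy by blast
  qed
  have angI: "\<And>x k k'. x \<in> X \<Longrightarrow> k \<noteq> k' \<Longrightarrow> 2 * pi * real k / real n \<noteq> 2 * pi * real k' / real n"
    using ang_eq npos by blast
  have sepX: "sep X A B"
    unfolding sep_def A_def B_def
  proof (intro conjI ballI impI)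
    fix x assume x: "x \<in> X"
    show "2 * pi * real (a x) / real n \<noteq> 2 * pi * real (b x) / real n" by (rule angI[OF x ab_ne[OF x x]])
    fix y assume y: "y \<in> X" and xy: "x \<noteq> y"
    show "2 * pi * real (a x) / real n \<noteq> 2 * pi * real (a y) / real n" by (rule angI[OF x aa_ne[OF x y xy]])
    show "2 * pi * real (a x) / real n \<noteq> 2 * pi * real (b y) / real n" by (rule angI[OF x ab_ne[OF x y]])
    show "2 * pi * real (b x) / real n \<noteq> 2 * pi * real (a y) / real n" using angI[OF x ab_ne[OF y x]] by metis
    show "2 * pi * real (b x) / real n \<noteq> 2 * pi * real (b y) / real n" by (rule angI[OF x bb_ne[OF x y xy]])
  qed
  obtain c where good: "good X A B c" using good_exists[OF finX sepX] by blast
  interpret cv: curves X A B c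
  proof
    show "finite X" "sep X A B" "good X A B c" by fact+
    show "\<forall>x\<in>X. 0 \<le> A x \<and> A x < 2 * pi" unfolding A_def using ang_rng a_lt by auto
    show "\<forall>x\<in>X. 0 \<le> B x \<and> B x < 2 * pi" unfolding B_def using ang_rng b_lt by auto
  qed
  have epF: "\<And>x. x \<in> X \<Longrightarrow> ep_pos w (p x, False) = cis (A x)"
    unfolding ep_pos_def pos_def[symmetric] A_def a_def n_def ..
  have epT: "\<And>x. x \<in> X \<Longrightarrow> ep_pos w (x, True) = cis (B x)"
    unfolding ep_pos_def pos_def[symmetric] B_def b_def n_def ..
  define T where "T = (\<lambda>u v. of_bool (chi (A u) (B u) (A v)) - of_bool (chi (A u) (B u) (B v)) :: int)"
  have inumT: "\<And>u v. u \<in> X \<Longrightarrow> v \<in> X \<Longrightarrow> u \<noteq> v \<Longrightarrow> inum (cv.Gam u) (cv.Gam v) = T u v"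
    unfolding T_def by (rule cv.inum_formula)
  have Tself: "\<And>u. T u u = 0" unfolding T_def by (rule chi_self)
  have Tanti: "\<And>u v. u \<in> X \<Longrightarrow> v \<in> X \<Longrightarrow> u \<noteq> v \<Longrightarrow> T u v + T v u = 0"
    unfolding T_def using sepX unfolding sep_def by (intro chi_anti) auto
  have idxSS: "\<And>x. x \<in> X \<Longrightarrow> idx w x = SS w (pos w (x, True)) - SS w (pos w (x, False)) + 1"
    unfolding idx_def using pre_pos[OF dist] memT memF by simp
  define M where "M = {k \<in> {..<n}. \<not> snd (w ! k)}"
  define P where "P = {k \<in> {..<n}. snd (w ! k)}"
  have bijA: "bij_betw a X M"
    unfolding bij_betw_def
  proof
    show "inj_on a X" using aa_ne unfolding inj_on_def by blast
    show "a ` X = M"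
    proof
      show "a ` X \<subseteq> M" unfolding M_def using a_lt a_nth by auto
      show "M \<subseteq> a ` X"
      proof
        fix k assume "k \<in> M"
        then have k: "k < n" "\<not> snd (w ! k)" unfolding M_def by auto
        obtain c0 where wk: "w ! k = (c0, False)" using k(2) by (metis prod.collapse)
        have c0: "c0 \<in> X" unfolding X_def using nth_mem[of k w] k(1) wk n_def by (metis mem_chords)
        have "a (p c0) = pos w (c0, False)" unfolding a_def using pp[OF c0] by simp
        also have "\<dots> = k" using pos_nth[OF dist, of k] k(1) wk n_def by simp
        finally show "k \<in> a ` X" using pX[OF c0] by force
      qed
    qed
  qed
  have bijB: "bij_betw b X P"
    unfolding bij_betw_def
  proof
    show "inj_on b X" using bb_ne unfolding inj_on_def by blast
    show "b ` X = P"
    proof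
      show "b ` X \<subseteq> P" unfolding P_def using b_lt b_nth by auto
      show "P \<subseteq> b ` X"
      proof
        fix k assume "k \<in> P"
        then have k: "k < n" "snd (w ! k)" unfolding P_def by auto
        obtain c0 where wk: "w ! k = (c0, True)" using k(2) by (metis prod.collapse)
        have c0: "c0 \<in> X" unfolding X_def using nth_mem[of k w] k(1) wk n_def by (metis mem_chords)
        have "b c0 = k" unfolding b_def using pos_nth[OF dist, of k] k(1) wk n_def by simp
        then show "k \<in> b ` X" using c0 by force
      qed
    qed
  qed
  have J: "(\<Sum>v\<in>X. T u v) = - (SS w (b u) - SS w (a u) + 1)" if u: "u \<in> X" for u
  proof -
    have n0: "0 < n" using npos u .
    have "(\<Sum>v\<in>X. T u v) = (\<Sum>v\<in>X. of_bool (chiN (a u) (b u) (a v))) - (\<Sum>v\<in>X. of_bool (chiN (a u) (b u) (b v)))"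
      unfolding T_def A_def B_def chi_ang[OF n0] by (simp add: sum_subtractf)
    also have "(\<Sum>v\<in>X. of_bool (chiN (a u) (b u) (a v)) :: int) = (\<Sum>k\<in>M. of_bool (chiN (a u) (b u) k))"
      using sum.reindex_bij_betw[OF bijA, of "\<lambda>k. of_bool (chiN (a u) (b u) k) :: int"] .
    also have "\<dots> = (\<Sum>k<n. if \<not> snd (w ! k) then of_bool (chiN (a u) (b u) k) else 0)"
      unfolding M_def by (subst sum.inter_filter) auto
    also have "(\<Sum>v\<in>X. of_bool (chiN (a u) (b u) (b v)) :: int) = (\<Sum>k\<in>P. of_bool (chiN (a u) (b u) k))"
      using sum.reindex_bij_betw[OF bijB, of "\<lambda>k. of_bool (chiN (a u) (b u) k) :: int"] .
    also have "\<dots> = (\<Sum>k<n. if snd (w ! k) then of_bool (chiN (a u) (b u) k) else 0)"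
      unfolding P_def by (subst sum.inter_filter) auto
    also have "(\<Sum>k<n. if \<not> snd (w ! k) then of_bool (chiN (a u) (b u) k) else 0) -
        (\<Sum>k<n. if snd (w ! k) then of_bool (chiN (a u) (b u) k) else 0)
      = - (\<Sum>k<n. if chiN (a u) (b u) k then sg (w ! k) else (0::int))"
      unfolding sum_subtractf[symmetric] sum_negf[symmetric]
      by (rule sum.cong) (auto simp: sg_def)
    also have "(\<Sum>k<n. if chiN (a u) (b u) k then sg (w ! k) else (0::int)) = SS w (b u) - SS w (a u) - sg (w ! a u)"
      unfolding n_def by (rule arc_sum[OF wf]) (use a_lt b_lt ab_ne u n_def in auto)
    finally show ?thesis using a_nth[OF u] by simp
  qed
  have Ieq: "(\<Sum>\<beta>\<in>{x, p x}. \<Sum>\<gamma>\<in>X - {x, p x}. inum (cv.Gam \<beta>) (cv.Gam \<gamma>)) = 0" if x: "x \<in> X" for x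
  proof (cases "p x = x")
    case True
    have s1: "{x, p x} = {x}" using True by simp
    have "(\<Sum>\<beta>\<in>{x, p x}. \<Sum>\<gamma>\<in>X - {x, p x}. inum (cv.Gam \<beta>) (cv.Gam \<gamma>)) = (\<Sum>\<gamma>\<in>X - {x}. inum (cv.Gam x) (cv.Gam \<gamma>))"
      unfolding s1 by simp
    also have "\<dots> = (\<Sum>\<gamma>\<in>X - {x}. T x \<gamma>)" by (rule sum.cong) (use inumT x in auto)
    also have "\<dots> = (\<Sum>\<gamma>\<in>X. T x \<gamma>)" using sum.remove[OF finX x, of "T x"] Tself by simp
    also have "\<dots> = - (SS w (b x) - SS w (a x) + 1)" by (rule J[OF x])
    also have "\<dots> = - idx w x" unfolding idxSS[OF x] a_def b_def True by simp
    also have "\<dots> = 0" using pidx[OF x] True by simp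
    finally show ?thesis .
  next
    case False
    define y where "y = p x"
    have y: "y \<in> X" "x \<noteq> y" "p y = x" using pX pp x False unfolding y_def by auto
    have F: "(\<Sum>\<gamma>\<in>X - {x, y}. inum (cv.Gam u) (cv.Gam \<gamma>)) = (\<Sum>\<gamma>\<in>X. T u \<gamma>) - T u x - T u y"
      if u: "u \<in> {x, y}" for u
    proof -
      have uX: "u \<in> X" using u x y by auto
      have "(\<Sum>\<gamma>\<in>X - {x, y}. inum (cv.Gam u) (cv.Gam \<gamma>)) = (\<Sum>\<gamma>\<in>X - {x, y}. T u \<gamma>)"
        using inumT[OF uX] u by (intro sum.cong) auto
      moreover have "(\<Sum>\<gamma>\<in>X. T u \<gamma>) = T u x + (\<Sum>\<gamma>\<in>X - {x}. T u \<gamma>)" by (rule sum.remove[OF finX x])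
      moreover have "(\<Sum>\<gamma>\<in>X - {x}. T u \<gamma>) = T u y + (\<Sum>\<gamma>\<in>X - {x} - {y}. T u \<gamma>)"
        by (rule sum.remove) (use finX y in auto)
      moreover have "X - {x} - {y} = X - {x, y}" by auto
      ultimately show ?thesis by simp
    qed
    have "(\<Sum>\<beta>\<in>{x, p x}. \<Sum>\<gamma>\<in>X - {x, p x}. inum (cv.Gam \<beta>) (cv.Gam \<gamma>))
        = (\<Sum>\<gamma>\<in>X - {x, y}. inum (cv.Gam x) (cv.Gam \<gamma>)) + (\<Sum>\<gamma>\<in>X - {x, y}. inum (cv.Gam y) (cv.Gam \<gamma>))"
      unfolding y_def[symmetric] using y(2) by simp
    also have "\<dots> = ((\<Sum>\<gamma>\<in>X. T x \<gamma>) - T x x - T x y) + ((\<Sum>\<gamma>\<in>X. T y \<gamma>) - T y x - T y y)"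
      using F[of x] F[of y] by simp
    also have "\<dots> = (\<Sum>\<gamma>\<in>X. T x \<gamma>) + (\<Sum>\<gamma>\<in>X. T y \<gamma>)"
      using Tself Tanti[OF x y(1,2)] by simp
    also have "\<dots> = - (SS w (b x) - SS w (a x) + 1) - (SS w (b y) - SS w (a y) + 1)"
      using J[OF x] J[OF y(1)] by simp
    also have "\<dots> = - (idx w x + idx w y)"
      unfolding idxSS[OF x] idxSS[OF y(1)] a_def b_def y(3) y_def[symmetric] by simp
    also have "\<dots> = 0" using pidx[OF x] unfolding y_def by simp
    finally show ?thesis .
  qed
  have "is_filamentation w p cv.Gam"
    unfolding is_filamentation_def X_def[symmetric]
  proof (intro conjI ballI)
    show "is_pairing X p" unfolding is_pairing_def using pX pp by auto
    show "general_position X cv.Gam" by (rule cv.gen_pos)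
    fix x assume x: "x \<in> X"
    show "filament_arc (cv.Gam x) (ep_pos w (p x, False)) (ep_pos w (x, True))"
      unfolding filament_arc_def epF[OF x] epT[OF x]
    proof (intro conjI ballI)
      show "cv.Gam x C1_differentiable_on {0..1}" by (rule cv.C1)
      fix t assume t: "t \<in> {0..1::real}"
      then show "dv (cv.Gam x) t \<noteq> 0" using cv.dv_Gam cv.Dv_nz x by auto
    next
      show "cv.Gam x 0 = cis (A x)" by (rule cv.Gam0)
      show "cv.Gam x 1 = cis (B x)" by (rule cv.Gam1)
      fix t assume t: "t \<in> {0<..<1::real}"
      then show "norm (cv.Gam x t) < 1" using cv.norm_Gam cv.rr_bounds(3) x by auto
    qed
  next
    fix x assume x: "x \<in> X"
    show "(\<Sum>\<beta>\<in>{x, p x}. \<Sum>\<gamma>\<in>X - {x, p x}. inum (cv.Gam \<beta>) (cv.Gam \<gamma>)) = 0" by (rule Ieq[OF x])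
  qed
  then show ?thesis unfolding admits_filamentation_def by blast
qed



theorem theorem5:
  fixes w :: ocd
  assumes "wf_ocd w"
    and "\<not> admits_filamentation w"
  shows "\<not> flat_equiv w []"
proof
  assume "flat_equiv w []"
  then have "wf_ocd w \<and> Cnd w" by (rule flat_equiv_Cnd)
  then have "admits_filamentation w" using main_fil by blast
  then show False using assms(2) by contradiction
qed

end
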